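(* Let $C$ be an $(n,k)$-code and $0\le d\le n-k$. Then $C$ is $\operatorname{rLD-MDS}_d(1)$ if and only if $C^\perp$ is $\operatorname{rMDS}_d(2)$.
   Context: $C$ is $(\rho,L)$ average-radius list-decodable if for every $y\in\mathbb F^n$ and every $L+1$ distinct codewords $c_0,\dots,c_L$, $\frac1{L+1}\sum_i\operatorname{wt}(y-c_i)>\rho n$. $C$ is $\operatorname{rLD-MDS}_d(L)$ if this holds with $\rho=\frac{L}{L+1}\frac{n-k-d}{n}$. For a $k'\times n$ matrix $V$ and $A_1,\dots,A_\ell\subseteq[n]$, $\mathcal G_{A_1,\dots,A_\ell}[V]$ is the block matrix whose $i$-th block row has $I_{k'}$ in the first block column and $V|_{A_i}$ (columns of $V$ in $A_i$) in block column $i+1$, zeros elsewhere. An $(n,k')$-code with generator matrix $V$ is $\operatorname{rMDS}_d(\ell)$ ($0\le d\le k'$) if $\mathcal G_{A_1,\dots,A_\ell}[V]$ has full column rank whenever $\mathcal G_{A_1,\dots,A_\ell}[W]$ has full column rank, $W$ a generic $(k'-d)\times n$ matrix (independent indeterminate entries). *)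

theory Defs
  imports "Jordan_Normal_Form.Matrix" "HOL-Library.Poly_Mapping" "HOL-Library.Product_Lexorder"
    "HOL-Computational_Algebra.Fraction_Field"
begin

(* Vectors in F^n are Jordan_Normal_Form vectors of dimension n; coordinates [n] are {0..<n}. *)

definition wt :: "'a::zero vec \<Rightarrow> nat" where
  "wt y = card {i. i < dim_vec y \<and> y $ i \<noteq> 0}"

definition full_col_rank :: "'a::field mat \<Rightarrow> bool" where
  "full_col_rank A \<longleftrightarrow>
     (\<forall>v \<in> carrier_vec (dim_col A). A *\<^sub>v v = zero_vec (dim_row A) \<longrightarrow> v = zero_vec (dim_col A))"

definition is_gen_mat :: "'a::field mat \<Rightarrow> 'a vec set \<Rightarrow> nat \<Rightarrow> nat \<Rightarrow> bool" where
  "is_gen_mat G C n k \<longleftrightarrow> G \<in> carrier_mat k n \<and> full_col_rank (transpose_mat G) \<and>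
     C = {transpose_mat G *\<^sub>v x | x. x \<in> carrier_vec k}"

definition lin_code :: "'a::field vec set \<Rightarrow> nat \<Rightarrow> nat \<Rightarrow> bool" where
  "lin_code C n k \<longleftrightarrow> (\<exists>G. is_gen_mat G C n k)"

definition dual_code :: "'a::field vec set \<Rightarrow> nat \<Rightarrow> 'a vec set" where
  "dual_code C n = {x \<in> carrier_vec n. \<forall>c \<in> C. x \<bullet> c = 0}"

definition avg_radius_LD :: "'a::field vec set \<Rightarrow> nat \<Rightarrow> real \<Rightarrow> nat \<Rightarrow> bool" where
  "avg_radius_LD C n \<rho> L \<longleftrightarrow>
     (\<forall>y \<in> carrier_vec n. \<forall>c :: nat \<Rightarrow> 'a vec.
        (\<forall>i \<le> L. c i \<in> C) \<and> inj_on c {..L} \<longrightarrow>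
        (1 / (real L + 1)) * (\<Sum>i\<le>L. real (wt (y - c i))) > \<rho> * real n)"

definition rLD_MDS :: "'a::field vec set \<Rightarrow> nat \<Rightarrow> nat \<Rightarrow> nat \<Rightarrow> nat \<Rightarrow> bool" where
  "rLD_MDS C n k d L \<longleftrightarrow>
     avg_radius_LD C n ((real L / (real L + 1)) * ((real n - real k - real d) / real n)) L"

definition restrict_cols :: "'a mat \<Rightarrow> nat set \<Rightarrow> 'a mat" where
  "restrict_cols V A = mat (dim_row V) (card A) (\<lambda>(r, c). V $$ (r, sorted_list_of_set A ! c))"

(* block column offset of the (j+1)-th block column (0-based block j of the V-blocks) *)
definition blk_off :: "nat \<Rightarrow> nat set list \<Rightarrow> nat \<Rightarrow> nat" where
  "blk_off k' As j = k' + (\<Sum>m<j. card (As ! m))"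

(* The block matrix G_{A_1,...,A_l}[V]; block row i (0-based) is
   [ I_{k'} | 0 ... 0 | V|_{A_i} | 0 ... 0 ], with V|_{A_i} in block column i+1 (after I). *)
definition G_mat :: "nat set list \<Rightarrow> 'a::{zero,one} mat \<Rightarrow> 'a mat" where
  "G_mat As V = (let k' = dim_row V; l = length As in
     mat (l * k') (blk_off k' As l)
       (\<lambda>(R, c). let i = R div k'; r = R mod k' in
          if c < k' then (if r = c then 1 else 0)
          else if blk_off k' As i \<le> c \<and> c < blk_off k' As (Suc i)
               then restrict_cols V (As ! i) $$ (r, c - blk_off k' As i)
               else 0))"

(* polynomials over F in indeterminates x_(i,j), and their fraction field *)
type_synonym 'a mpoly_pm = "((nat \<times> nat) \<Rightarrow>\<^sub>0 nat) \<Rightarrow>\<^sub>0 'a"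

(* the generic m x n matrix whose entries are independent indeterminates over F,
   viewed in the field of rational functions F(x_(i,j)) *)
definition generic_mat :: "nat \<Rightarrow> nat \<Rightarrow> ('a::field) mpoly_pm fract mat" where
  "generic_mat m n = mat m n (\<lambda>(i, j).
      Fract (Poly_Mapping.single (Poly_Mapping.single (i, j) (1::nat)) (1::'a)) 1)"

definition rMDS_mat :: "'a itself \<Rightarrow> 'a::field mat \<Rightarrow> nat \<Rightarrow> nat \<Rightarrow> nat \<Rightarrow> nat \<Rightarrow> bool" where
  "rMDS_mat _ V n k' d l \<longleftrightarrow>
     (\<forall>As. length As = l \<and> (\<forall>A \<in> set As. A \<subseteq> {..<n}) \<longrightarrow>
        full_col_rank (G_mat As (generic_mat (k' - d) n :: 'a mpoly_pm fract mat)) \<longrightarrow>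
        full_col_rank (G_mat As V))"

(* an (n,k') code D is rMDS_d(l): its generator matrices are rMDS_d(l)
   (the property does not depend on the choice of generator matrix) *)
definition rMDS :: "'a::field vec set \<Rightarrow> nat \<Rightarrow> nat \<Rightarrow> nat \<Rightarrow> nat \<Rightarrow> bool" where
  "rMDS D n k' d l \<longleftrightarrow> (\<forall>V. is_gen_mat V D n k' \<longrightarrow> rMDS_mat TYPE('a) V n k' d l)"

end

theory Submission
  imports Defs Jordan_Normal_Form.Determinant
begin

lemma mv_index:
  assumes "A \<in> carrier_mat nr nc" "v \<in> carrier_vec nc" "i < nr"
  shows "(A *\<^sub>v v) $ i = (\<Sum>j<nc. A $$ (i, j) * v $ j)"
  using assms by (auto simp: scalar_prod_def atLeast0LessThan intro!: sum.cong)

lemma wt_zero[simp]: "wt (0\<^sub>v n :: 'a::zero vec) = 0"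
  unfolding wt_def by simp

lemma vec_nonzero_ex:
  assumes "v \<in> carrier_vec n" "v \<noteq> 0\<^sub>v n"
  obtains i where "i < n" "v $ i \<noteq> 0"
proof -
  have "\<exists>i<n. v $ i \<noteq> 0"
  proof (rule ccontr)
    assume "\<not> ?thesis"
    hence "v = 0\<^sub>v n" using assms(1) by (intro eq_vecI) auto
    thus False using assms(2) by simp
  qed
  thus ?thesis using that by blast
qed

lemma wt_pos: assumes "v \<in> carrier_vec n" "v \<noteq> 0\<^sub>v n" shows "wt v > 0"
proof -
  obtain i where i: "i < n" "v $ i \<noteq> 0" using vec_nonzero_ex[OF assms] .
  have "i \<in> {i. i < dim_vec v \<and> v $ i \<noteq> 0}" using i assms(1) by simp
  moreover have "finite {i. i < dim_vec v \<and> v $ i \<noteq> 0}" by simp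
  ultimately show ?thesis unfolding wt_def using card_gt_0_iff by blast
qed

lemma wt_le_support:
  assumes "v \<in> carrier_vec n" "\<And>i. i < n \<Longrightarrow> v $ i \<noteq> 0 \<Longrightarrow> i \<in> S" "finite S"
  shows "wt v \<le> card S"
proof -
  have dv: "dim_vec v = n" using assms(1) by simp
  have "{i. i < dim_vec v \<and> v $ i \<noteq> 0} \<subseteq> S" using assms(2) dv by blast
  thus ?thesis unfolding wt_def using assms(3) by (rule card_mono[rotated])
qed

lemma wt_triangle:
  fixes a b y :: "'a::ab_group_add vec"
  assumes "a \<in> carrier_vec n" "b \<in> carrier_vec n" "y \<in> carrier_vec n"
  shows "wt (a - b) \<le> wt (y - a) + wt (y - b)"
proof -
  have "{i. i < dim_vec (a - b) \<and> (a - b) $ i \<noteq> 0} \<subseteq>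
        {i. i < dim_vec (y - a) \<and> (y - a) $ i \<noteq> 0} \<union> {i. i < dim_vec (y - b) \<and> (y - b) $ i \<noteq> 0}"
  proof (rule subsetI)
    fix i assume "i \<in> {i. i < dim_vec (a - b) \<and> (a - b) $ i \<noteq> 0}"
    hence i0: "i < dim_vec (a - b)" "(a - b) $ i \<noteq> 0" by auto
    have i: "i < n" using i0(1) assms(2) by simp
    have ab: "a $ i \<noteq> b $ i" using i0(2) i assms(1,2) by simp
    have e1: "(y - a) $ i = y $ i - a $ i" "(y - b) $ i = y $ i - b $ i"
      "dim_vec (y - a) = n" "dim_vec (y - b) = n"
      using i assms by simp_all
    show "i \<in> {i. i < dim_vec (y - a) \<and> (y - a) $ i \<noteq> 0} \<union> {i. i < dim_vec (y - b) \<and> (y - b) $ i \<noteq> 0}"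
    proof (cases "y $ i = a $ i")
      case True thus ?thesis using i ab e1 by simp
    next
      case False thus ?thesis using i e1 by simp
    qed
  qed
  hence "wt (a - b) \<le> card ({i. i < dim_vec (y - a) \<and> (y - a) $ i \<noteq> 0} \<union> {i. i < dim_vec (y - b) \<and> (y - b) $ i \<noteq> 0})"
    unfolding wt_def by (intro card_mono) auto
  also have "\<dots> \<le> wt (y - a) + wt (y - b)" unfolding wt_def by (rule card_Un_le)
  finally show ?thesis .
qed

lemma vec_diff_zero:
  fixes a b :: "'a::ab_group_add vec"
  assumes "a \<in> carrier_vec n" "b \<in> carrier_vec n" "a - b = 0\<^sub>v n"
  shows "a = b"
proof (rule eq_vecI)
  fix i assume i: "i < dim_vec b"
  hence "(a - b) $ i = 0" using assms by simp
  thus "a $ i = b $ i" using i assms(1,2) by simp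
qed (use assms in simp)

lemma half_less: "(a::real) < b \<Longrightarrow> a / 2 < 1/2 * b" by simp

lemma rld_iff:
  fixes C :: "'a::field vec set"
  assumes sub: "C \<subseteq> carrier_vec n" and z: "0\<^sub>v n \<in> C"
    and cl: "\<And>a b. a \<in> C \<Longrightarrow> b \<in> C \<Longrightarrow> a - b \<in> C"
    and kd: "k + d \<le> n"
  shows "rLD_MDS C n k d 1 \<longleftrightarrow> (\<forall>c\<in>C. c \<noteq> 0\<^sub>v n \<longrightarrow> n - k - d < wt c)"
proof (cases "n = 0")
  case True
  have cz: "c = 0\<^sub>v n" if "c \<in> C" for c
  proof -
    have d: "dim_vec c = n" by (rule carrier_vecD[OF subsetD[OF sub that]])
    show ?thesis using d True vec_of_dim_0 by metis
  qed
  hence ab: "a = b" if "a \<in> C" "b \<in> C" for a b using that by metis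
  have nc: "\<not> (c 0 \<in> C \<and> c 1 \<in> C \<and> inj_on c {..1})" for c :: "nat \<Rightarrow> 'a vec"
  proof
    assume a: "c 0 \<in> C \<and> c 1 \<in> C \<and> inj_on c {..1}"
    hence "c 0 = c 1" using ab by blast
    moreover have "(0::nat) \<in> {..1}" "(1::nat) \<in> {..1}" by auto
    ultimately show False using a unfolding inj_on_def by (metis zero_neq_one)
  qed
  moreover have "\<not> (c 0 \<in> C \<and> c 1 \<in> C \<and> inj_on c {..1}) \<Longrightarrow> \<not> ((\<forall>i\<le>1. c i \<in> C) \<and> inj_on c {..1})" for c :: "nat \<Rightarrow> 'a vec"
    by auto
  have "(\<forall>c\<in>C. c \<noteq> 0\<^sub>v n \<longrightarrow> n - k - d < wt c)" using cz by blast
  moreover have "rLD_MDS C n k d 1" unfolding rLD_MDS_def avg_radius_LD_def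
    using nc by auto
  ultimately show ?thesis by blast
next
  case False
  have rho: "(real 1 / (real 1 + 1)) * ((real n - real k - real d) / real n) * real n
     = real (n - k - d) / 2" using False kd by (simp add: of_nat_diff)
  have key: "rLD_MDS C n k d 1 \<longleftrightarrow>
    (\<forall>y\<in>carrier_vec n. \<forall>a\<in>C. \<forall>b\<in>C. a \<noteq> b \<longrightarrow> n - k - d < wt (y - a) + wt (y - b))"
  proof -
    have "rLD_MDS C n k d 1 \<longleftrightarrow> (\<forall>y\<in>carrier_vec n. \<forall>c :: nat \<Rightarrow> 'a vec.
        c 0 \<in> C \<and> c 1 \<in> C \<and> c 0 \<noteq> c 1 \<longrightarrow>
        real (n - k - d) / 2 < (1/2) * (real (wt (y - c 0)) + real (wt (y - c 1))))"
    proof -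
      have e: "{..1::nat} = {0,1}" by auto
      have eq1: "((\<forall>i\<le>1. c i \<in> C) \<and> inj_on c {..1}) \<longleftrightarrow> (c 0 \<in> C \<and> c 1 \<in> C \<and> c 0 \<noteq> c 1)"
        for c :: "nat \<Rightarrow> 'a vec"
      proof -
        have "(\<forall>i\<le>1. c i \<in> C) \<longleftrightarrow> (\<forall>i\<in>{0,1::nat}. c i \<in> C)" using e by (metis atMost_iff)
        also have "\<dots> \<longleftrightarrow> c 0 \<in> C \<and> c 1 \<in> C" by simp
        finally show ?thesis unfolding e by (simp add: inj_on_insert)
      qed
      have eq2: "(1 / (real 1 + 1)) * (\<Sum>i\<le>1. f i) = 1/2 * (f 0 + f 1)" for f :: "nat \<Rightarrow> real"
        unfolding e by simp
      show ?thesis unfolding rLD_MDS_def avg_radius_LD_def eq1 eq2 rho ..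
    qed
    also have "\<dots> \<longleftrightarrow> (\<forall>y\<in>carrier_vec n. \<forall>a\<in>C. \<forall>b\<in>C. a \<noteq> b \<longrightarrow> n - k - d < wt (y - a) + wt (y - b))"
    proof (intro ball_cong refl iffI ballI impI allI)
      fix y a b assume H: "\<forall>c :: nat \<Rightarrow> 'a vec. c 0 \<in> C \<and> c 1 \<in> C \<and> c 0 \<noteq> c 1 \<longrightarrow>
        real (n - k - d) / 2 < (1/2) * (real (wt (y - c 0)) + real (wt (y - c 1)))"
        and ab: "a \<in> C" "b \<in> C" "a \<noteq> b"
      from H[rule_format, of "\<lambda>i. if i = 0 then a else b"] ab
      show "n - k - d < wt (y - a) + wt (y - b)" by simp
    next
      fix y and c :: "nat \<Rightarrow> 'a vec"
      assume H: "\<forall>a\<in>C. \<forall>b\<in>C. a \<noteq> b \<longrightarrow> n - k - d < wt (y - a) + wt (y - b)"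
        and c: "c 0 \<in> C \<and> c 1 \<in> C \<and> c 0 \<noteq> c 1"
      from H c have "n - k - d < wt (y - c 0) + wt (y - c 1)" by blast
      hence "real (n - k - d) < real (wt (y - c 0)) + real (wt (y - c 1))"
        by (metis of_nat_add of_nat_less_iff)
      then show "real (n - k - d) / 2 < (1/2) * (real (wt (y - c 0)) + real (wt (y - c 1)))"
        by (rule half_less)
    qed
    finally show ?thesis .
  qed
  show ?thesis unfolding key
  proof (intro iffI ballI impI)
    fix c assume H: "\<forall>y\<in>carrier_vec n. \<forall>a\<in>C. \<forall>b\<in>C. a \<noteq> b \<longrightarrow> n - k - d < wt (y - a) + wt (y - b)"
      and c: "c \<in> C" "c \<noteq> 0\<^sub>v n"
    have cc: "c \<in> carrier_vec n" using c sub by auto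
    from H[rule_format, OF cc c(1) z c(2)] cc show "n - k - d < wt c" by simp
  next
    fix y a b :: "'a vec" assume H: "\<forall>c\<in>C. c \<noteq> 0\<^sub>v n \<longrightarrow> n - k - d < wt c"
      and y: "y \<in> carrier_vec n" and ab: "a \<in> C" "b \<in> C" "a \<noteq> b"
    have abc: "a \<in> carrier_vec n" "b \<in> carrier_vec n" using ab sub by auto
    have "a - b \<noteq> 0\<^sub>v n" using ab abc
      using vec_diff_zero by blast
    hence "n - k - d < wt (a - b)" using H cl ab by blast
    also have "\<dots> \<le> wt (y - a) + wt (y - b)" by (rule wt_triangle[OF abc y])
    finally show "n - k - d < wt (y - a) + wt (y - b)" .
  qed
qed

lemma sum_split_add: "(\<Sum>c<a+b. g c) = (\<Sum>c<a. g c) + (\<Sum>c<b. g (a + c))"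
  for a b :: nat and g :: "nat \<Rightarrow> 'b::comm_monoid_add"
  by (induction b) (simp_all add: add.assoc)

lemma blk_off2:
  "blk_off k' [A1, A2] 0 = k'" "blk_off k' [A1, A2] (Suc 0) = k' + card A1"
  "blk_off k' [A1, A2] 2 = k' + card A1 + card A2"
  "blk_off k' [A1, A2] (Suc (Suc 0)) = k' + card A1 + card A2"
  unfolding blk_off_def by (simp_all add: numeral_2_eq_2)

lemma G_mat_dims:
  "dim_row (G_mat [A1, A2] V) = 2 * dim_row V"
  "dim_col (G_mat [A1, A2] V) = dim_row V + card A1 + card A2"
  unfolding G_mat_def Let_def using blk_off2 by simp_all

lemma G_mat_entry1:
  assumes r: "r < dim_row V" and c: "c < dim_row V + card A1 + card A2"
  shows "G_mat [A1, A2] V $$ (r, c) = (if c < dim_row V then (if r = c then 1 else 0)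
     else if c < dim_row V + card A1 then restrict_cols V A1 $$ (r, c - dim_row V) else 0)"
proof -
  have rd: "r div dim_row V = 0" "r mod dim_row V = r" using r by simp_all
  have "r < 2 * dim_row V" using r by simp
  thus ?thesis unfolding G_mat_def Let_def using c rd
    by (simp add: blk_off2)
qed

lemma G_mat_entry2:
  assumes r: "r < dim_row V" and c: "c < dim_row V + card A1 + card A2"
  shows "G_mat [A1, A2] V $$ (dim_row V + r, c) = (if c < dim_row V then (if r = c then 1 else 0)
     else if c < dim_row V + card A1 then 0 else restrict_cols V A2 $$ (r, c - dim_row V - card A1))"
proof -
  have rd: "(dim_row V + r) div dim_row V = 1" "(dim_row V + r) mod dim_row V = r" using r by simp_all
  have "dim_row V + r < 2 * dim_row V" using r by simp
  thus ?thesis unfolding G_mat_def Let_def using c rd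
    by (simp add: blk_off2 numeral_2_eq_2)
qed

lemma G_mat_carrier: "G_mat [A1, A2] V \<in> carrier_mat (2 * dim_row V) (dim_row V + card A1 + card A2)"
  by (rule carrier_matI[OF G_mat_dims(1) G_mat_dims(2)])

lemma sum_delta_lt: "r < (k::nat) \<Longrightarrow> (\<Sum>c<k. (if r = c then 1 else 0) * (f c :: 'b::semiring_1)) = f r"
proof -
  assume r: "r < k"
  have "(\<Sum>c<k. (if r = c then 1 else 0) * f c) = (\<Sum>c<k. if r = c then f c else 0)"
    by (rule sum.cong) auto
  also have "\<dots> = f r" using r sum.delta'[of "{..<k}" r f] by simp
  finally show ?thesis .
qed

lemma G_mat_mv:
  fixes V :: "'a::field mat"
  assumes v: "v \<in> carrier_vec (dim_row V + card A1 + card A2)" and r: "r < dim_row V"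
  shows "(G_mat [A1,A2] V *\<^sub>v v) $ r = v $ r + (\<Sum>c<card A1. restrict_cols V A1 $$ (r,c) * v $ (dim_row V + c))"
    "(G_mat [A1,A2] V *\<^sub>v v) $ (dim_row V + r) = v $ r + (\<Sum>c<card A2. restrict_cols V A2 $$ (r,c) * v $ (dim_row V + card A1 + c))"
proof -
  let ?k = "dim_row V" and ?a1 = "card A1" and ?a2 = "card A2" and ?G = "G_mat [A1,A2] V"
  have split: "(\<Sum>c<?k + ?a1 + ?a2. g c) = (\<Sum>c<?k. g c) + (\<Sum>c<?a1. g (?k + c)) + (\<Sum>c<?a2. g (?k + ?a1 + c))"
    for g :: "nat \<Rightarrow> 'a" by (simp add: sum_split_add)
  have r1: "r < 2 * ?k" "?k + r < 2 * ?k" using r by simp_all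
  have "(?G *\<^sub>v v) $ r = (\<Sum>c<?k + ?a1 + ?a2. ?G $$ (r, c) * v $ c)"
    by (rule mv_index[OF G_mat_carrier v r1(1)])
  also have "\<dots> = (\<Sum>c<?k. (if r = c then 1 else 0) * v $ c) + (\<Sum>c<?a1. restrict_cols V A1 $$ (r,c) * v $ (?k + c))
      + (\<Sum>c<?a2. 0)"
    unfolding split using G_mat_entry1[OF r] by (intro arg_cong2[where f = "(+)"] sum.cong) auto
  also have "\<dots> = v $ r + (\<Sum>c<?a1. restrict_cols V A1 $$ (r,c) * v $ (?k + c))"
    using sum_delta_lt[OF r] by simp
  finally show "(?G *\<^sub>v v) $ r = v $ r + (\<Sum>c<?a1. restrict_cols V A1 $$ (r,c) * v $ (?k + c))" .
  have "(?G *\<^sub>v v) $ (?k + r) = (\<Sum>c<?k + ?a1 + ?a2. ?G $$ (?k + r, c) * v $ c)"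
    by (rule mv_index[OF G_mat_carrier v r1(2)])
  also have "\<dots> = (\<Sum>c<?k. (if r = c then 1 else 0) * v $ c) + (\<Sum>c<?a1. 0)
      + (\<Sum>c<?a2. restrict_cols V A2 $$ (r,c) * v $ (?k + ?a1 + c))"
    unfolding split using G_mat_entry2[OF r] by (intro arg_cong2[where f = "(+)"] sum.cong) auto
  also have "\<dots> = v $ r + (\<Sum>c<?a2. restrict_cols V A2 $$ (r,c) * v $ (?k + ?a1 + c))"
    using sum_delta_lt[OF r] by simp
  finally show "(?G *\<^sub>v v) $ (?k + r) = v $ r + (\<Sum>c<?a2. restrict_cols V A2 $$ (r,c) * v $ (?k + ?a1 + c))" .
qed

lemma restrict_cols_dims[simp]: "dim_row (restrict_cols V A) = dim_row V" "dim_col (restrict_cols V A) = card A"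
  unfolding restrict_cols_def by simp_all

lemma row_restrict_cols_carrier[simp]: "row (restrict_cols V A) j \<in> carrier_vec (card A)"
  unfolding carrier_vec_def by simp

lemma restrict_cols_carrier: "restrict_cols V A \<in> carrier_mat (dim_row V) (card A)"
  unfolding restrict_cols_def by simp

lemma restrict_cols_mv:
  assumes "u \<in> carrier_vec (card A)" "r < dim_row V"
  shows "(restrict_cols V A *\<^sub>v u) $ r = (\<Sum>c<card A. restrict_cols V A $$ (r, c) * u $ c)"
  by (rule mv_index[OF restrict_cols_carrier assms])

lemma G_mat_fcr_iff:
  fixes V :: "'a::field mat"
  shows "full_col_rank (G_mat [A1,A2] V) \<longleftrightarrow> \<not> (\<exists>u1 u2. u1 \<in> carrier_vec (card A1) \<and> u2 \<in> carrier_vec (card A2)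
     \<and> (u1 \<noteq> 0\<^sub>v (card A1) \<or> u2 \<noteq> 0\<^sub>v (card A2)) \<and> restrict_cols V A1 *\<^sub>v u1 = restrict_cols V A2 *\<^sub>v u2)"
proof -
  let ?k = "dim_row V" and ?a1 = "card A1" and ?a2 = "card A2" and ?G = "G_mat [A1,A2] V"
  let ?N = "?k + ?a1 + ?a2"
  let ?V1 = "restrict_cols V A1" and ?V2 = "restrict_cols V A2"
  have dG: "dim_col ?G = ?N" "dim_row ?G = 2 * ?k" by (rule G_mat_dims)+
  show ?thesis
  proof
    assume fcr: "full_col_rank ?G"
    show "\<not> (\<exists>u1 u2. u1 \<in> carrier_vec ?a1 \<and> u2 \<in> carrier_vec ?a2
     \<and> (u1 \<noteq> 0\<^sub>v ?a1 \<or> u2 \<noteq> 0\<^sub>v ?a2) \<and> ?V1 *\<^sub>v u1 = ?V2 *\<^sub>v u2)"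
    proof
      assume "\<exists>u1 u2. u1 \<in> carrier_vec ?a1 \<and> u2 \<in> carrier_vec ?a2
         \<and> (u1 \<noteq> 0\<^sub>v ?a1 \<or> u2 \<noteq> 0\<^sub>v ?a2) \<and> ?V1 *\<^sub>v u1 = ?V2 *\<^sub>v u2"
      then obtain u1 u2 where u: "u1 \<in> carrier_vec ?a1" "u2 \<in> carrier_vec ?a2"
        "u1 \<noteq> 0\<^sub>v ?a1 \<or> u2 \<noteq> 0\<^sub>v ?a2" "?V1 *\<^sub>v u1 = ?V2 *\<^sub>v u2" by blast
      define v where "v = vec ?N (\<lambda>j. if j < ?k then - (?V1 *\<^sub>v u1) $ j
          else if j < ?k + ?a1 then u1 $ (j - ?k) else u2 $ (j - ?k - ?a1))"
      have vc: "v \<in> carrier_vec ?N" unfolding v_def by simp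
      have s1: "(\<Sum>c<?a1. ?V1 $$ (r,c) * v $ (?k + c)) = (?V1 *\<^sub>v u1) $ r" if "r < ?k" for r
      proof -
        have "(\<Sum>c<?a1. ?V1 $$ (r,c) * v $ (?k + c)) = (\<Sum>c<?a1. ?V1 $$ (r,c) * u1 $ c)"
          by (rule sum.cong) (simp_all add: v_def)
        also have "\<dots> = (?V1 *\<^sub>v u1) $ r" by (rule restrict_cols_mv[symmetric, OF u(1) that])
        finally show ?thesis .
      qed
      have s2: "(\<Sum>c<?a2. ?V2 $$ (r,c) * v $ (?k + ?a1 + c)) = (?V2 *\<^sub>v u2) $ r" if "r < ?k" for r
      proof -
        have "(\<Sum>c<?a2. ?V2 $$ (r,c) * v $ (?k + ?a1 + c)) = (\<Sum>c<?a2. ?V2 $$ (r,c) * u2 $ c)"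
          by (rule sum.cong) (simp_all add: v_def)
        also have "\<dots> = (?V2 *\<^sub>v u2) $ r" by (rule restrict_cols_mv[symmetric, OF u(2) that])
        finally show ?thesis .
      qed
      have "?G *\<^sub>v v = 0\<^sub>v (dim_row ?G)"
      proof (rule eq_vecI)
        fix R assume "R < dim_vec (0\<^sub>v (dim_row ?G) :: 'a vec)"
        hence R: "R < 2 * ?k" using dG by simp
        show "(?G *\<^sub>v v) $ R = 0\<^sub>v (dim_row ?G) $ R"
        proof (cases "R < ?k")
          case True
          have "(?G *\<^sub>v v) $ R = v $ R + (?V1 *\<^sub>v u1) $ R"
            using G_mat_mv(1)[OF vc True] s1[OF True] by simp
          also have "\<dots> = 0" using True by (simp add: v_def)
          finally show ?thesis using R dG by simp
        next
          case False
          then obtain r where r: "R = ?k + r" "r < ?k" using R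
            by (metis add_diff_inverse_nat add_less_cancel_left mult_2)
          have "(?G *\<^sub>v v) $ R = v $ r + (?V2 *\<^sub>v u2) $ r"
            using G_mat_mv(2)[OF vc r(2)] s2[OF r(2)] r(1) by simp
          also have "\<dots> = 0" using r u(4) by (simp add: v_def)
          finally show ?thesis using R dG by simp
        qed
      qed (simp add: dG)
      hence "v = 0\<^sub>v ?N" using fcr vc unfolding full_col_rank_def dG by blast
      moreover have "v \<noteq> 0\<^sub>v ?N"
      proof
        assume v0: "v = 0\<^sub>v ?N"
        have "u1 = 0\<^sub>v ?a1"
        proof (rule eq_vecI)
          fix c assume "c < dim_vec (0\<^sub>v ?a1 :: 'a vec)"
          hence c: "c < ?a1" by simp
          have "v $ (?k + c) = 0" using v0 c by simp
          thus "u1 $ c = 0\<^sub>v ?a1 $ c" using c by (simp add: v_def)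
        qed (use u(1) in simp)
        moreover have "u2 = 0\<^sub>v ?a2"
        proof (rule eq_vecI)
          fix c assume "c < dim_vec (0\<^sub>v ?a2 :: 'a vec)"
          hence c: "c < ?a2" by simp
          have "v $ (?k + ?a1 + c) = 0" using v0 c by simp
          thus "u2 $ c = 0\<^sub>v ?a2 $ c" using c by (simp add: v_def)
        qed (use u(2) in simp)
        ultimately show False using u(3) by blast
      qed
      ultimately show False by blast
    qed
  next
    assume nex: "\<not> (\<exists>u1 u2. u1 \<in> carrier_vec ?a1 \<and> u2 \<in> carrier_vec ?a2
     \<and> (u1 \<noteq> 0\<^sub>v ?a1 \<or> u2 \<noteq> 0\<^sub>v ?a2) \<and> ?V1 *\<^sub>v u1 = ?V2 *\<^sub>v u2)"
    show "full_col_rank ?G" unfolding full_col_rank_def dG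
    proof (intro ballI impI)
      fix v assume vc: "v \<in> carrier_vec ?N" and Gv: "?G *\<^sub>v v = 0\<^sub>v (2 * ?k)"
      define u1 where "u1 = vec ?a1 (\<lambda>c. v $ (?k + c))"
      define u2 where "u2 = vec ?a2 (\<lambda>c. v $ (?k + ?a1 + c))"
      have u1c: "u1 \<in> carrier_vec ?a1" and u2c: "u2 \<in> carrier_vec ?a2" unfolding u1_def u2_def by simp_all
      have e1: "v $ r + (?V1 *\<^sub>v u1) $ r = 0" if "r < ?k" for r
      proof -
        have "(?G *\<^sub>v v) $ r = 0" using Gv that by simp
        moreover have "(\<Sum>c<?a1. ?V1 $$ (r,c) * v $ (?k + c)) = (\<Sum>c<?a1. ?V1 $$ (r,c) * u1 $ c)"
          by (rule sum.cong) (simp_all add: u1_def)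
        moreover note restrict_cols_mv[OF u1c that]
        ultimately show ?thesis using G_mat_mv(1)[OF vc that] by simp
      qed
      have e2: "v $ r + (?V2 *\<^sub>v u2) $ r = 0" if "r < ?k" for r
      proof -
        have "(?G *\<^sub>v v) $ (?k + r) = 0" using Gv that by simp
        moreover have "(\<Sum>c<?a2. ?V2 $$ (r,c) * v $ (?k + ?a1 + c)) = (\<Sum>c<?a2. ?V2 $$ (r,c) * u2 $ c)"
          by (rule sum.cong) (simp_all add: u2_def)
        moreover note restrict_cols_mv[OF u2c that]
        ultimately show ?thesis using G_mat_mv(2)[OF vc that] by simp
      qed
      have "?V1 *\<^sub>v u1 = ?V2 *\<^sub>v u2"
      proof (rule eq_vecI)
        fix r assume "r < dim_vec (?V2 *\<^sub>v u2)"
        hence r: "r < ?k" by simp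
        show "(?V1 *\<^sub>v u1) $ r = (?V2 *\<^sub>v u2) $ r" using e1[OF r] e2[OF r]
          by (metis add_left_cancel)
      qed simp
      hence z: "u1 = 0\<^sub>v ?a1" "u2 = 0\<^sub>v ?a2" using nex u1c u2c by blast+
      show "v = 0\<^sub>v ?N"
      proof (rule eq_vecI)
        fix j assume "j < dim_vec (0\<^sub>v ?N :: 'a vec)"
        hence j: "j < ?N" by simp
        show "v $ j = 0\<^sub>v ?N $ j"
        proof -
          consider "j < ?k" | "?k \<le> j" "j < ?k + ?a1" | "?k + ?a1 \<le> j" by linarith
          thus ?thesis
          proof cases
            case 1
            have "(?V1 *\<^sub>v u1) $ j = 0" using z(1) 1 by simp
            thus ?thesis using e1[OF 1] j by simp
          next
            case 2
            have "u1 $ (j - ?k) = 0" using z(1) 2 by simp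
            thus ?thesis using 2 j by (simp add: u1_def)
          next
            case 3
            obtain t where t: "j = ?k + ?a1 + t" using 3 le_Suc_ex by blast
            have t2: "t < ?a2" using t j by simp
            have "u2 $ t = 0" using z(2) t2 by simp
            moreover have "u2 $ t = v $ j" using t t2 by (simp add: u2_def)
            ultimately show ?thesis using j by simp
          qed
        qed
      qed (use vc in simp)
    qed
  qed
qed

lemma distinct_nth_bij: "distinct xs \<Longrightarrow> bij_betw (\<lambda>c. xs ! c) {..<length xs} (set xs)"
  unfolding bij_betw_def
proof
  assume d: "distinct xs"
  show "inj_on (\<lambda>c. xs ! c) {..<length xs}" using d by (simp add: inj_on_def nth_eq_iff_index_eq)
  show "(\<lambda>c. xs ! c) ` {..<length xs} = set xs" by (auto simp: set_conv_nth)
qed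

lemma sl_bij: "finite A \<Longrightarrow> bij_betw (\<lambda>c. sorted_list_of_set A ! c) {..<card A} A"
  using distinct_nth_bij[of "sorted_list_of_set A"] by simp

lemma restrict_mv:
  fixes V :: "'a::field mat"
  assumes V: "V \<in> carrier_mat k' n" and A: "A \<subseteq> {..<n}" and w: "w \<in> carrier_vec n"
    and supp: "\<And>j. j < n \<Longrightarrow> w $ j \<noteq> 0 \<Longrightarrow> j \<in> A"
  shows "V *\<^sub>v w = restrict_cols V A *\<^sub>v vec (card A) (\<lambda>c. w $ (sorted_list_of_set A ! c))"
proof (rule eq_vecI)
  let ?s = "sorted_list_of_set A"
  have fA: "finite A" using A finite_subset by blast
  let ?u = "vec (card A) (\<lambda>c. w $ (?s ! c))"
  fix r assume "r < dim_vec (restrict_cols V A *\<^sub>v ?u)"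
  hence r: "r < k'" using V by simp
  have "(V *\<^sub>v w) $ r = (\<Sum>j<n. V $$ (r, j) * w $ j)" by (rule mv_index[OF V w r])
  also have "\<dots> = (\<Sum>j\<in>A. V $$ (r, j) * w $ j)"
    using A supp by (intro sum.mono_neutral_right) auto
  also have "\<dots> = (\<Sum>c<card A. V $$ (r, ?s ! c) * w $ (?s ! c))"
    by (rule sum.reindex_bij_betw[OF sl_bij[OF fA], symmetric])
  also have "\<dots> = (\<Sum>c<card A. restrict_cols V A $$ (r, c) * ?u $ c)"
    using r V by (intro sum.cong) (auto simp: restrict_cols_def)
  also have "\<dots> = (restrict_cols V A *\<^sub>v ?u) $ r"
    by (rule restrict_cols_mv[symmetric]) (use r V in auto)
  finally show "(V *\<^sub>v w) $ r = (restrict_cols V A *\<^sub>v ?u) $ r" .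
qed (use V in simp)

definition spread :: "nat \<Rightarrow> nat set \<Rightarrow> 'a::zero vec \<Rightarrow> 'a vec" where
  "spread n A u = vec n (\<lambda>j. if j \<in> A then u $ (the_inv_into {..<card A} (\<lambda>c. sorted_list_of_set A ! c) j) else 0)"

lemma spread_carrier: "spread n A u \<in> carrier_vec n" unfolding spread_def by simp

lemma spread_at:
  assumes A: "A \<subseteq> {..<n}" and c: "c < card A"
  shows "spread n A u $ (sorted_list_of_set A ! c) = u $ c"
proof -
  have fA: "finite A" using A finite_subset by blast
  note b = sl_bij[OF fA]
  have m: "sorted_list_of_set A ! c \<in> A" using b c by (auto simp: bij_betw_def)
  hence "sorted_list_of_set A ! c < n" using A by auto
  moreover have "the_inv_into {..<card A} (\<lambda>c. sorted_list_of_set A ! c) (sorted_list_of_set A ! c) = c"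
    using b c by (intro the_inv_into_f_f) (auto simp: bij_betw_def)
  ultimately show ?thesis using m unfolding spread_def by simp
qed

lemma spread_out: "j \<notin> A \<Longrightarrow> spread n A u $ j = 0 \<or> j \<ge> n"
  unfolding spread_def by (cases "j < n") auto

lemma spread_mv:
  fixes V :: "'a::field mat"
  assumes V: "V \<in> carrier_mat k' n" and A: "A \<subseteq> {..<n}" and u: "u \<in> carrier_vec (card A)"
  shows "restrict_cols V A *\<^sub>v u = V *\<^sub>v spread n A u"
proof -
  have "V *\<^sub>v spread n A u = restrict_cols V A *\<^sub>v vec (card A) (\<lambda>c. spread n A u $ (sorted_list_of_set A ! c))"
    using spread_out by (intro restrict_mv[OF V A spread_carrier]) fastforce
  also have "vec (card A) (\<lambda>c. spread n A u $ (sorted_list_of_set A ! c)) = u"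
    using u spread_at[OF A] by (intro eq_vecI) auto
  finally show ?thesis by simp
qed

lemma big_dep:
  fixes W :: "'a::field mat"
  assumes big: "dim_row W < card A1 + card A2"
  shows "\<exists>u1 u2. u1 \<in> carrier_vec (card A1) \<and> u2 \<in> carrier_vec (card A2)
     \<and> (u1 \<noteq> 0\<^sub>v (card A1) \<or> u2 \<noteq> 0\<^sub>v (card A2)) \<and> restrict_cols W A1 *\<^sub>v u1 = restrict_cols W A2 *\<^sub>v u2"
proof -
  let ?m = "dim_row W" and ?a1 = "card A1" and ?a2 = "card A2"
  let ?N = "?a1 + ?a2"
  let ?W1 = "restrict_cols W A1" and ?W2 = "restrict_cols W A2"
  define f where "f = (\<lambda>r c. if c < ?a1 then ?W1 $$ (r, c) else - ?W2 $$ (r, c - ?a1))"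
  define M where "M = mat\<^sub>r ?N ?N (\<lambda>i. if i = ?m then 0\<^sub>v ?N else vec ?N (\<lambda>c. if i < ?m then f i c else 0))"
  have Mc: "M \<in> carrier_mat ?N ?N" unfolding M_def by simp
  have "det M = 0" unfolding M_def by (rule det_row_0) (use big in auto)
  then obtain v where v: "v \<in> carrier_vec ?N" "v \<noteq> 0\<^sub>v ?N" "M *\<^sub>v v = 0\<^sub>v ?N"
    using det_0_iff_vec_prod_zero_field[OF Mc] by blast
  define u1 where "u1 = vec ?a1 (\<lambda>c. v $ c)"
  define u2 where "u2 = vec ?a2 (\<lambda>c. v $ (?a1 + c))"
  have u1c: "u1 \<in> carrier_vec ?a1" and u2c: "u2 \<in> carrier_vec ?a2" unfolding u1_def u2_def by simp_all
  have "?W1 *\<^sub>v u1 = ?W2 *\<^sub>v u2"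
  proof (rule eq_vecI)
    fix r assume "r < dim_vec (?W2 *\<^sub>v u2)"
    hence r: "r < ?m" by simp
    have rN: "r < ?N" using r big by simp
    have "0 = (M *\<^sub>v v) $ r" using v(3) rN by simp
    also have "\<dots> = (\<Sum>c<?N. M $$ (r, c) * v $ c)" by (rule mv_index[OF Mc v(1) rN])
    also have "\<dots> = (\<Sum>c<?a1. M $$ (r, c) * v $ c) + (\<Sum>c<?a2. M $$ (r, ?a1 + c) * v $ (?a1 + c))"
      by (rule sum_split_add)
    also have "(\<Sum>c<?a1. M $$ (r, c) * v $ c) = (\<Sum>c<?a1. ?W1 $$ (r, c) * u1 $ c)"
      using r rN unfolding M_def f_def u1_def by (intro sum.cong) auto
    also have "(\<Sum>c<?a2. M $$ (r, ?a1 + c) * v $ (?a1 + c)) = - (\<Sum>c<?a2. ?W2 $$ (r, c) * u2 $ c)"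
      using r rN unfolding M_def f_def u2_def sum_negf[symmetric] by (intro sum.cong) auto
    also have "(\<Sum>c<?a1. ?W1 $$ (r, c) * u1 $ c) = (?W1 *\<^sub>v u1) $ r"
      by (rule restrict_cols_mv[symmetric, OF u1c]) (use r in simp)
    also have "(\<Sum>c<?a2. ?W2 $$ (r, c) * u2 $ c) = (?W2 *\<^sub>v u2) $ r"
      by (rule restrict_cols_mv[symmetric, OF u2c]) (use r in simp)
    finally show "(?W1 *\<^sub>v u1) $ r = (?W2 *\<^sub>v u2) $ r" by (simp add: eq_neg_iff_add_eq_0)
  qed simp
  moreover have "u1 \<noteq> 0\<^sub>v ?a1 \<or> u2 \<noteq> 0\<^sub>v ?a2"
  proof (rule ccontr)
    assume "\<not> ?thesis"
    hence z: "u1 = 0\<^sub>v ?a1" "u2 = 0\<^sub>v ?a2" by auto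
    have "v = 0\<^sub>v ?N"
    proof (rule eq_vecI)
      fix j assume "j < dim_vec (0\<^sub>v ?N :: 'a vec)"
      hence j: "j < ?N" by simp
      show "v $ j = 0\<^sub>v ?N $ j"
      proof (cases "j < ?a1")
        case True
        have "u1 $ j = 0" using z True by simp
        thus ?thesis using True j by (simp add: u1_def)
      next
        case False
        then obtain t where t: "j = ?a1 + t" using le_Suc_ex by (metis not_less)
        have t2: "t < ?a2" using t j by simp
        have "u2 $ t = 0" using z t2 by simp
        thus ?thesis using t t2 j by (simp add: u2_def)
      qed
    qed (use v in simp)
    thus False using v(2) by simp
  qed
  ultimately show ?thesis using u1c u2c by blast
qed

lemma fr_sum: "Fract (sum f S) 1 = (\<Sum>x\<in>S. Fract (f x) (1::'b::idom))"
proof -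
  have "sum ((\<lambda>x. Fract x (1::'b)) \<circ> f) S = Fract (sum f S) 1"
    by (rule sum_comp_morphism) (simp_all add: Zero_fract_def)
  thus ?thesis by (simp add: o_def)
qed

lemma fr_prod: "Fract (prod f S) 1 = (\<Prod>x\<in>S. Fract (f x) (1::'b::idom))"
proof (cases "finite S")
  case True thus ?thesis
  proof (induction S rule: finite_induct)
    case empty thus ?case by (simp add: One_fract_def)
  next
    case (insert x F)
    have "Fract (prod f (insert x F)) 1 = Fract (f x) 1 * Fract (prod f F) (1::'b)"
      using insert(1,2) by simp
    thus ?case using insert by simp
  qed
next
  case False thus ?thesis by (simp add: One_fract_def)
qed

lemma fr_sign: "Fract (of_int (sign p)) 1 = (of_int (sign p) :: 'b::idom fract)"
  by (cases "evenperm p") (simp_all add: sign_def One_fract_def)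

lemma fr_zero_iff: "Fract x (1::'b::idom) = 0 \<longleftrightarrow> x = 0"
  by (simp add: Zero_fract_def eq_fract)

definition Xv :: "nat \<Rightarrow> nat \<Rightarrow> 'a::field mpoly_pm" where
  "Xv i j = Poly_Mapping.single (Poly_Mapping.single (i,j) 1) 1"

lemma prod_Xv: "finite S \<Longrightarrow> (\<Prod>i\<in>S. Xv i (g i)) =
   (Poly_Mapping.single (\<Sum>i\<in>S. Poly_Mapping.single (i, g i) 1) 1 :: 'a::field mpoly_pm)"
  by (induction S rule: finite_induct) (simp_all add: Xv_def mult_single)

lemma lookup_sign_mult: "Poly_Mapping.lookup (of_int (sign p) * q) k = of_int (sign p) * Poly_Mapping.lookup q k"
  for q :: "'a::field mpoly_pm"
  by (cases "evenperm p") (simp_all add: sign_def)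

lemma lookup_e:
  fixes g :: "nat \<Rightarrow> nat"
  shows "Poly_Mapping.lookup (\<Sum>i'\<in>{0..<a}. Poly_Mapping.single (i', g i') (1::nat)) (i, j) = (if i < a \<and> g i = j then 1 else 0)"
proof -
  have "Poly_Mapping.lookup (\<Sum>i'\<in>{0..<a}. Poly_Mapping.single (i', g i') (1::nat)) (i, j)
      = (\<Sum>i'\<in>{0..<a}. if i' = i \<and> g i' = j then 1 else 0)"
    unfolding lookup_sum by (intro sum.cong) (auto simp: lookup_single when_def)
  also have "\<dots> = (\<Sum>i'\<in>{0..<a}. if i' = i then (if g i = j then 1 else 0) else 0)"
    by (intro sum.cong) auto
  also have "\<dots> = (if i < a \<and> g i = j then 1 else 0)"
    by (simp add: sum.delta)
  finally show ?thesis .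
qed

lemma det_generic_nz:
  assumes A: "finite A"
  shows "det (mat (card A) (card A) (\<lambda>(i,j). Fract (Xv i (sorted_list_of_set A ! j)) 1) :: 'a::field mpoly_pm fract mat) \<noteq> 0"
proof -
  let ?a = "card A" and ?s = "sorted_list_of_set A"
  let ?M = "mat ?a ?a (\<lambda>(i,j). Fract (Xv i (?s ! j)) 1) :: 'a mpoly_pm fract mat"
  let ?P = "{p. p permutes {0..<?a}}"
  define e where "e = (\<lambda>p. (\<Sum>i\<in>{0..<?a}. Poly_Mapping.single (i, ?s ! p i) (1::nat)))"
  define D where "D = (\<Sum>p\<in>?P. of_int (sign p) * (\<Prod>i=0..<?a. Xv i (?s ! p i)) :: 'a mpoly_pm)"
  have "det ?M = (\<Sum>p\<in>?P. of_int (sign p) * (\<Prod>i=0..<?a. ?M $$ (i, p i)))"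
    by (rule det_def') simp
  also have "\<dots> = (\<Sum>p\<in>?P. Fract (of_int (sign p) * (\<Prod>i=0..<?a. Xv i (?s ! p i))) 1)"
  proof (rule sum.cong[OF refl])
    fix p assume p: "p \<in> ?P"
    have pi: "p i < ?a" if "i < ?a" for i using p that permutes_in_image[of p "{0..<?a}" i] by auto
    have "(\<Prod>i=0..<?a. ?M $$ (i, p i)) = (\<Prod>i=0..<?a. Fract (Xv i (?s ! p i)) 1)"
      using pi by (intro prod.cong) auto
    moreover have "Fract (of_int (sign p) * (\<Prod>i=0..<?a. Xv i (?s ! p i))) 1 =
        Fract (of_int (sign p)) 1 * Fract (\<Prod>i=0..<?a. Xv i (?s ! p i)) (1 :: 'a mpoly_pm)" by simp
    ultimately show "of_int (sign p) * (\<Prod>i=0..<?a. ?M $$ (i, p i)) = Fract (of_int (sign p) * (\<Prod>i=0..<?a. Xv i (?s ! p i))) 1"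
      by (simp only: fr_prod fr_sign)
  qed
  also have "\<dots> = Fract D 1" unfolding D_def by (rule fr_sum[symmetric])
  finally have detM: "det ?M = Fract D 1" .
  have "Poly_Mapping.lookup D (e id) = (\<Sum>p\<in>?P. of_int (sign p) * Poly_Mapping.lookup (Poly_Mapping.single (e p) 1) (e id))"
    unfolding D_def lookup_sum lookup_sign_mult e_def by (simp add: prod_Xv)
  also have "\<dots> = (\<Sum>p\<in>?P. if p = id then of_int (sign p) else 0)"
  proof (rule sum.cong[OF refl])
    fix p assume p: "p \<in> ?P"
    have "e p = e id \<longleftrightarrow> p = id"
    proof
      assume eq: "e p = e id"
      show "p = id"
      proof
        fix i show "p i = id i"
        proof (cases "i < ?a")
          case True
          have pi: "p i < ?a" using p True permutes_in_image[of p "{0..<?a}" i] by auto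
          have "Poly_Mapping.lookup (e p) (i, ?s ! p i) = 1" unfolding e_def lookup_e using True by simp
          hence "Poly_Mapping.lookup (e id) (i, ?s ! p i) = 1" using eq by simp
          hence "?s ! i = ?s ! p i" unfolding e_def lookup_e by (auto split: if_splits)
          hence "i = p i" using True pi A by (simp add: nth_eq_iff_index_eq)
          thus ?thesis by simp
        next
          case False
          thus ?thesis using p by (auto simp: permutes_def)
        qed
      qed
    qed simp
    thus "of_int (sign p) * Poly_Mapping.lookup (Poly_Mapping.single (e p) 1) (e id) = (if p = id then of_int (sign p) else 0)"
      by (auto simp: lookup_single when_def)
  qed
  also have "\<dots> = of_int (sign (id :: nat \<Rightarrow> nat))"
    by (simp add: sum.delta finite_permutations permutes_id)
  also have "\<dots> = 1" by (simp add: sign_id)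
  finally have "Poly_Mapping.lookup D (e id) = 1" .
  hence "D \<noteq> 0" by auto
  thus ?thesis unfolding detM fr_zero_iff .
qed

lemma generic_indep:
  assumes A: "A \<subseteq> {..<n}" and am: "card A \<le> m" and u: "u \<in> carrier_vec (card A)"
    and Wu: "restrict_cols (generic_mat m n :: 'a::field mpoly_pm fract mat) A *\<^sub>v u = 0\<^sub>v m"
  shows "u = 0\<^sub>v (card A)"
proof (rule ccontr)
  assume nz: "u \<noteq> 0\<^sub>v (card A)"
  let ?a = "card A" and ?s = "sorted_list_of_set A"
  let ?W = "generic_mat m n :: 'a mpoly_pm fract mat"
  let ?M = "mat ?a ?a (\<lambda>(i,j). Fract (Xv i (?s ! j)) 1) :: 'a mpoly_pm fract mat"
  have fA: "finite A" using A finite_subset by blast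
  have sn: "?s ! c < n" if "c < ?a" for c
    using sl_bij[OF fA] that A by (auto simp: bij_betw_def)
  have Mc: "?M \<in> carrier_mat ?a ?a" by simp
  have "?M *\<^sub>v u = 0\<^sub>v ?a"
  proof (rule eq_vecI)
    fix i assume "i < dim_vec (0\<^sub>v ?a :: 'a mpoly_pm fract vec)"
    hence i: "i < ?a" by simp
    hence im: "i < m" using am by simp
    have "(?M *\<^sub>v u) $ i = (\<Sum>c<?a. ?M $$ (i, c) * u $ c)" by (rule mv_index[OF Mc u i])
    also have "\<dots> = (\<Sum>c<?a. restrict_cols ?W A $$ (i, c) * u $ c)"
      using i im sn by (intro sum.cong) (auto simp: restrict_cols_def generic_mat_def Xv_def)
    also have "\<dots> = (restrict_cols ?W A *\<^sub>v u) $ i"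
      by (rule restrict_cols_mv[symmetric, OF u]) (use im in \<open>simp add: generic_mat_def\<close>)
    also have "\<dots> = 0" using Wu im by simp
    finally show "(?M *\<^sub>v u) $ i = 0\<^sub>v ?a $ i" using i by simp
  qed simp
  hence "det ?M = 0" using det_0_iff_vec_prod_zero_field[OF Mc] u nz by blast
  thus False using det_generic_nz[OF fA] by blast
qed

lemma row_nonzero_GJ:
  fixes G :: "'a::field mat"
  assumes G: "G \<in> carrier_mat k n" and fcr: "full_col_rank (transpose_mat G)"
    and P: "P \<in> carrier_mat k k" and Q: "Q \<in> carrier_mat k k" and PQ: "P * Q = 1\<^sub>m k"
    and i: "i < k"
  shows "\<exists>j<n. (P * G) $$ (i, j) \<noteq> 0"
proof (rule ccontr)
  assume "\<not> ?thesis"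
  hence z: "(P * G) $$ (i, j) = 0" if "j < n" for j using that by auto
  let ?p = "row P i"
  have pc: "?p \<in> carrier_vec k" using P unfolding carrier_vec_def by simp
  have "transpose_mat G *\<^sub>v ?p = 0\<^sub>v n"
  proof (rule eq_vecI)
    fix j assume "j < dim_vec (0\<^sub>v n :: 'a vec)"
    hence j: "j < n" by simp
    have "(transpose_mat G *\<^sub>v ?p) $ j = col G j \<bullet> ?p" using j G by simp
    also have "\<dots> = ?p \<bullet> col G j" using G pc j by (intro comm_scalar_prod[of _ k]) auto
    also have "\<dots> = (P * G) $$ (i, j)" using i j P G by simp
    also have "\<dots> = 0" using z j by simp
    finally show "(transpose_mat G *\<^sub>v ?p) $ j = 0\<^sub>v n $ j" using j by simp
  qed (use G in simp)
  hence "?p = 0\<^sub>v k" using fcr pc G unfolding full_col_rank_def by auto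
  hence "(P * Q) $$ (i, i) = 0" using i P Q by simp
  thus False using PQ i by simp
qed

lemma pivots_GJ:
  fixes G :: "'a::field mat"
  assumes G: "G \<in> carrier_mat k n" and fcr: "full_col_rank (transpose_mat G)"
  shows "\<exists>R P f. R \<in> carrier_mat k n \<and> P \<in> carrier_mat k k \<and> R = P * G \<and>
     (\<forall>x\<in>carrier_vec n. (G *\<^sub>v x = 0\<^sub>v k) = (R *\<^sub>v x = 0\<^sub>v k)) \<and>
     (\<forall>i<k. f i < n) \<and> inj_on f {..<k} \<and> (\<forall>i<k. \<forall>l<k. R $$ (i, f l) = (if i = l then 1 else 0))"
proof -
  define R where "R = gauss_jordan_single G"
  note gj = gauss_jordan_single[OF G R_def[symmetric]]
  from gj(4) obtain P Q where PQ: "R = P * G" "P \<in> carrier_mat k k" "Q \<in> carrier_mat k k" "P * Q = 1\<^sub>m k"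
    by blast
  have Rc: "R \<in> carrier_mat k n" by (rule gj(2))
  from gj(3) obtain f where pf: "pivot_fun R f n" unfolding row_echelon_form_def using Rc by auto
  have pf': "\<And>i. i < k \<Longrightarrow> f i \<le> n \<and>
      (f i < n \<longrightarrow> R $$ (i, f i) = 1 \<and> (\<forall>i'<k. i' \<noteq> i \<longrightarrow> R $$ (i', f i) = 0)) \<and>
      (\<forall>j<f i. R $$ (i, j) = 0)"
    using pf Rc unfolding pivot_fun_def Let_def by auto
  have fn: "f i < n" if i: "i < k" for i
  proof (rule ccontr)
    assume "\<not> f i < n"
    hence "\<forall>j<n. R $$ (i, j) = 0" using pf'[OF i] by auto
    thus False using row_nonzero_GJ[OF G fcr PQ(2,3,4) i] PQ(1) by auto
  qed
  have piv: "R $$ (i, f l) = (if i = l then 1 else 0)" if "i < k" "l < k" for i l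
    using pf'[OF that(2)] fn[OF that(2)] that by auto
  have inj: "inj_on f {..<k}"
  proof (rule inj_onI)
    fix i l assume il: "i \<in> {..<k}" "l \<in> {..<k}" "f i = f l"
    show "i = l"
    proof (rule ccontr)
      assume ne: "i \<noteq> l"
      have ik: "i < k" "l < k" using il(1,2) by auto
      have "R $$ (i, f l) = (if i = l then 1 else 0)" by (rule piv[OF ik])
      hence "R $$ (i, f l) = 0" using ne by simp
      moreover have "R $$ (i, f i) = (if i = i then 1 else 0)" by (rule piv[OF ik(1) ik(1)])
      ultimately show False using il(3) by simp
    qed
  qed
  show ?thesis using Rc PQ(1,2) gj(1) fn inj piv by blast
qed

lemma orth_mv:
  fixes A B :: "'a::comm_ring_1 mat"
  assumes A: "A \<in> carrier_mat a n" and B: "B \<in> carrier_mat b n"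
    and o: "\<And>i t. i < a \<Longrightarrow> t < b \<Longrightarrow> (\<Sum>j<n. A $$ (i,j) * B $$ (t,j)) = 0"
    and x: "x \<in> carrier_vec b"
  shows "A *\<^sub>v (transpose_mat B *\<^sub>v x) = 0\<^sub>v a"
proof (rule eq_vecI)
  have Bt: "transpose_mat B \<in> carrier_mat n b" using B by simp
  have Btx: "transpose_mat B *\<^sub>v x \<in> carrier_vec n" using Bt x by simp
  fix i assume "i < dim_vec (0\<^sub>v a :: 'a vec)"
  hence i: "i < a" by simp
  have "(A *\<^sub>v (transpose_mat B *\<^sub>v x)) $ i = (\<Sum>j<n. A $$ (i,j) * (transpose_mat B *\<^sub>v x) $ j)"
    by (rule mv_index[OF A Btx i])
  also have "\<dots> = (\<Sum>j<n. A $$ (i,j) * (\<Sum>t<b. B $$ (t,j) * x $ t))"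
    using B by (intro sum.cong refl arg_cong2[where f = "(*)"]) (subst mv_index[OF Bt x], auto)
  also have "\<dots> = (\<Sum>j<n. \<Sum>t<b. A $$ (i,j) * B $$ (t,j) * x $ t)"
    by (simp add: sum_distrib_left mult.assoc)
  also have "\<dots> = (\<Sum>t<b. \<Sum>j<n. A $$ (i,j) * B $$ (t,j) * x $ t)" by (rule sum.swap)
  also have "\<dots> = (\<Sum>t<b. (\<Sum>j<n. A $$ (i,j) * B $$ (t,j)) * x $ t)"
    by (simp add: sum_distrib_right)
  also have "\<dots> = 0" using o i by simp
  finally show "(A *\<^sub>v (transpose_mat B *\<^sub>v x)) $ i = 0\<^sub>v a $ i" using i by simp
qed (use A in simp)

lemma split_piv:
  fixes f q :: "nat \<Rightarrow> nat"
  assumes fn: "\<forall>i<k. f i < n" and inj: "inj_on f {..<k}"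
    and q: "bij_betw q {..<m'} ({..<n} - f ` {..<k})"
  shows "(\<Sum>j<n. g j) = (\<Sum>l<k. g (f l)) + (\<Sum>s<m'. (g (q s) :: 'b::comm_monoid_add))"
proof -
  have u: "{..<n} = f ` {..<k} \<union> ({..<n} - f ` {..<k})" using fn by auto
  have "(\<Sum>j<n. g j) = (\<Sum>j\<in>f ` {..<k}. g j) + (\<Sum>j\<in>{..<n} - f ` {..<k}. g j)"
    by (subst u, rule sum.union_disjoint) auto
  also have "(\<Sum>j\<in>f ` {..<k}. g j) = (\<Sum>l<k. g (f l))" by (rule sum.reindex_cong[OF inj refl refl])
  also have "(\<Sum>j\<in>{..<n} - f ` {..<k}. g j) = (\<Sum>s<m'. g (q s))"
    by (rule sum.reindex_bij_betw[OF q, symmetric])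
  finally show ?thesis .
qed

lemma systematic_core:
  fixes R :: "'a::field mat"
  assumes Rc: "R \<in> carrier_mat k n" and fn: "\<forall>i<k. f i < n" and inj: "inj_on f {..<k}"
    and piv: "\<forall>i<k. \<forall>l<k. R $$ (i, f l) = (if i = l then 1 else 0)"
  shows "k \<le> n \<and> (\<exists>V0. V0 \<in> carrier_mat (n - k) n \<and> full_col_rank (transpose_mat V0) \<and>
     {transpose_mat V0 *\<^sub>v x | x. x \<in> carrier_vec (n - k)} = {y \<in> carrier_vec n. R *\<^sub>v y = 0\<^sub>v k} \<and>
     (\<forall>u\<in>carrier_vec n. V0 *\<^sub>v u = 0\<^sub>v (n - k) \<longrightarrow> (\<exists>x\<in>carrier_vec k. u = transpose_mat R *\<^sub>v x)))"
proof -
  let ?F = "f ` {..<k}"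
  let ?N = "{..<n} - ?F"
  let ?m = "n - k"
  have Fsub: "?F \<subseteq> {..<n}" using fn by auto
  have cardF: "card ?F = k" using card_image[OF inj] by simp
  have kn: "k \<le> n" using card_mono[OF _ Fsub] cardF by simp
  have cardN: "card ?N = ?m" using card_Diff_subset[OF _ Fsub] cardF by simp
  obtain q where q: "bij_betw q {..<?m} ?N"
    using ex_bij_betw_nat_finite[of ?N] cardN by (auto simp: atLeast0LessThan)
  have qN: "q s \<in> ?N" if "s < ?m" for s using q that by (auto simp: bij_betw_def)
  have qn: "q s < n" if "s < ?m" for s using qN[OF that] by simp
  have qF: "q s \<noteq> f l" if "s < ?m" "l < k" for s l using qN[OF that(1)] that(2) by auto
  have qinj: "q s = q t \<longleftrightarrow> s = t" if "s < ?m" "t < ?m" for s t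
    using q that unfolding bij_betw_def inj_on_def by auto
  have finj: "f l = f l' \<longleftrightarrow> l = l'" if "l < k" "l' < k" for l l'
    using inj that unfolding inj_on_def by auto
  have cover: "(\<exists>l<k. j = f l) \<or> (\<exists>s<?m. j = q s)" if "j < n" for j
  proof (cases "j \<in> ?F")
    case True thus ?thesis by auto
  next
    case False
    hence "j \<in> ?N" using that by simp
    hence "j \<in> q ` {..<?m}" using q by (simp add: bij_betw_def)
    thus ?thesis by auto
  qed
  note split = split_piv[OF fn inj q]
  define V0 where "V0 = mat ?m n (\<lambda>(t,j). (if j = q t then 1 else 0) - (\<Sum>l<k. if j = f l then R $$ (l, q t) else 0))"
  have V0c: "V0 \<in> carrier_mat ?m n" unfolding V0_def by simp
  have Vq: "V0 $$ (t, q s) = (if s = t then 1 else 0)" if "t < ?m" "s < ?m" for t s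
  proof -
    have "(\<Sum>l<k. if q s = f l then R $$ (l, q t) else 0) = (\<Sum>l<k. 0)"
      using qF[OF that(2)] by (intro sum.cong) auto
    thus ?thesis unfolding V0_def using that qn qinj by simp
  qed
  have Vf: "V0 $$ (t, f l) = - R $$ (l, q t)" if "t < ?m" "l < k" for t l
  proof -
    have "(\<Sum>l'<k. if f l = f l' then R $$ (l', q t) else 0) = (\<Sum>l'<k. if l = l' then R $$ (l', q t) else 0)"
      using finj that(2) by (intro sum.cong) auto
    also have "\<dots> = R $$ (l, q t)" using that(2) by (simp add: sum.delta)
    finally show ?thesis unfolding V0_def using that fn qF[OF that(1) that(2)] by auto
  qed
  have Rrow: "(R *\<^sub>v v) $ i = v $ (f i) + (\<Sum>s<?m. R $$ (i, q s) * v $ (q s))"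
    if v: "v \<in> carrier_vec n" and i: "i < k" for v i
  proof -
    have "(R *\<^sub>v v) $ i = (\<Sum>j<n. R $$ (i, j) * v $ j)" by (rule mv_index[OF Rc v i])
    also have "\<dots> = (\<Sum>l<k. R $$ (i, f l) * v $ (f l)) + (\<Sum>s<?m. R $$ (i, q s) * v $ (q s))"
      by (rule split)
    also have "(\<Sum>l<k. R $$ (i, f l) * v $ (f l)) = (\<Sum>l<k. (if i = l then 1 else 0) * v $ (f l))"
      using piv i by (intro sum.cong) auto
    also have "\<dots> = v $ (f i)" by (rule sum_delta_lt[OF i])
    finally show ?thesis .
  qed
  have Vrow: "(V0 *\<^sub>v v) $ t = v $ (q t) - (\<Sum>l<k. R $$ (l, q t) * v $ (f l))"
    if v: "v \<in> carrier_vec n" and t: "t < ?m" for v t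
  proof -
    have "(V0 *\<^sub>v v) $ t = (\<Sum>j<n. V0 $$ (t, j) * v $ j)" by (rule mv_index[OF V0c v t])
    also have "\<dots> = (\<Sum>l<k. V0 $$ (t, f l) * v $ (f l)) + (\<Sum>s<?m. V0 $$ (t, q s) * v $ (q s))"
      by (rule split)
    also have "(\<Sum>l<k. V0 $$ (t, f l) * v $ (f l)) = - (\<Sum>l<k. R $$ (l, q t) * v $ (f l))"
      using Vf t by (simp add: sum_negf[symmetric])
    also have "(\<Sum>s<?m. V0 $$ (t, q s) * v $ (q s)) = (\<Sum>s<?m. (if t = s then 1 else 0) * v $ (q s))"
      using Vq t by (intro sum.cong) auto
    also have "\<dots> = v $ (q t)" by (rule sum_delta_lt[OF t])
    finally show ?thesis by simp
  qed
  have orth1: "(\<Sum>j<n. R $$ (i,j) * V0 $$ (t,j)) = 0" if i: "i < k" and t: "t < ?m" for i t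
  proof -
    have "(\<Sum>j<n. R $$ (i,j) * V0 $$ (t,j)) =
      (\<Sum>l<k. R $$ (i, f l) * V0 $$ (t, f l)) + (\<Sum>s<?m. R $$ (i, q s) * V0 $$ (t, q s))"
      by (rule split)
    also have "(\<Sum>l<k. R $$ (i, f l) * V0 $$ (t, f l)) = (\<Sum>l<k. (if i = l then 1 else 0) * (- R $$ (l, q t)))"
      using piv Vf i t by (intro sum.cong) auto
    also have "\<dots> = - R $$ (i, q t)" by (rule sum_delta_lt[OF i])
    also have "(\<Sum>s<?m. R $$ (i, q s) * V0 $$ (t, q s)) = (\<Sum>s<?m. (if t = s then 1 else 0) * R $$ (i, q s))"
      using Vq t by (intro sum.cong) auto
    also have "\<dots> = R $$ (i, q t)" by (rule sum_delta_lt[OF t])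
    finally show ?thesis by simp
  qed
  have orth2: "(\<Sum>j<n. V0 $$ (t,j) * R $$ (i,j)) = 0" if t: "t < ?m" and i: "i < k" for i t
    using orth1[OF i t] by (simp add: mult.commute)
  have VtX: "(transpose_mat V0 *\<^sub>v x) $ (q s) = x $ s" if x: "x \<in> carrier_vec ?m" and s: "s < ?m" for x s
  proof -
    have Vt: "transpose_mat V0 \<in> carrier_mat n ?m" using V0c by simp
    have "(transpose_mat V0 *\<^sub>v x) $ (q s) = (\<Sum>t<?m. transpose_mat V0 $$ (q s, t) * x $ t)"
      by (rule mv_index[OF Vt x qn[OF s]])
    also have "\<dots> = (\<Sum>t<?m. (if s = t then 1 else 0) * x $ t)"
      using Vq s qn[OF s] V0c by (intro sum.cong) auto
    also have "\<dots> = x $ s" by (rule sum_delta_lt[OF s])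
    finally show ?thesis .
  qed
  have RtX: "(transpose_mat R *\<^sub>v x) $ (f l) = x $ l" if x: "x \<in> carrier_vec k" and l: "l < k" for x l
  proof -
    have Rt: "transpose_mat R \<in> carrier_mat n k" using Rc by simp
    have fl: "f l < n" using fn l by simp
    have "(transpose_mat R *\<^sub>v x) $ (f l) = (\<Sum>i<k. transpose_mat R $$ (f l, i) * x $ i)"
      by (rule mv_index[OF Rt x fl])
    also have "\<dots> = (\<Sum>i<k. (if l = i then 1 else 0) * x $ i)"
      using piv l fl Rc by (intro sum.cong) auto
    also have "\<dots> = x $ l" by (rule sum_delta_lt[OF l])
    finally show ?thesis .
  qed
  have fcr: "full_col_rank (transpose_mat V0)"
    unfolding full_col_rank_def
  proof (intro ballI impI)
    fix x assume x: "x \<in> carrier_vec (dim_col (transpose_mat V0))"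
      and z: "transpose_mat V0 *\<^sub>v x = 0\<^sub>v (dim_row (transpose_mat V0))"
    have x': "x \<in> carrier_vec ?m" using x V0c by simp
    show "x = 0\<^sub>v (dim_col (transpose_mat V0))"
    proof (rule eq_vecI)
      fix s assume "s < dim_vec (0\<^sub>v (dim_col (transpose_mat V0)) :: 'a vec)"
      hence s: "s < ?m" using V0c by simp
      have "x $ s = (transpose_mat V0 *\<^sub>v x) $ (q s)" using VtX[OF x' s] by simp
      also have "\<dots> = 0" using z qn[OF s] V0c by simp
      finally show "x $ s = 0\<^sub>v (dim_col (transpose_mat V0)) $ s" using s V0c by simp
    qed (use x in simp)
  qed
  have img: "{transpose_mat V0 *\<^sub>v x | x. x \<in> carrier_vec ?m} = {y \<in> carrier_vec n. R *\<^sub>v y = 0\<^sub>v k}"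
  proof (intro equalityI subsetI)
    fix y assume "y \<in> {transpose_mat V0 *\<^sub>v x | x. x \<in> carrier_vec ?m}"
    then obtain x where x: "x \<in> carrier_vec ?m" "y = transpose_mat V0 *\<^sub>v x" by blast
    have "R *\<^sub>v y = 0\<^sub>v k" unfolding x(2) by (rule orth_mv[OF Rc V0c orth1 x(1)])
    moreover have "y \<in> carrier_vec n" using x V0c by simp
    ultimately show "y \<in> {y \<in> carrier_vec n. R *\<^sub>v y = 0\<^sub>v k}" by simp
  next
    fix y assume "y \<in> {y \<in> carrier_vec n. R *\<^sub>v y = 0\<^sub>v k}"
    hence y: "y \<in> carrier_vec n" "R *\<^sub>v y = 0\<^sub>v k" by auto
    define x where "x = vec ?m (\<lambda>s. y $ (q s))"
    have xc: "x \<in> carrier_vec ?m" unfolding x_def by simp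
    define w where "w = transpose_mat V0 *\<^sub>v x"
    have wc: "w \<in> carrier_vec n" unfolding w_def using V0c xc by simp
    have Rw: "R *\<^sub>v w = 0\<^sub>v k" unfolding w_def by (rule orth_mv[OF Rc V0c orth1 xc])
    have wq: "w $ (q s) = y $ (q s)" if "s < ?m" for s
      unfolding w_def using VtX[OF xc that] that by (simp add: x_def)
    have "y = w"
    proof (rule eq_vecI)
      fix j assume "j < dim_vec w"
      hence j: "j < n" using wc by simp
      show "y $ j = w $ j"
      proof (cases "\<exists>s<?m. j = q s")
        case True thus ?thesis using wq by auto
      next
        case False
        then obtain l where l: "l < k" "j = f l" using cover[OF j] by blast
        have "y $ (f l) + (\<Sum>s<?m. R $$ (l, q s) * y $ (q s)) = 0"
          using Rrow[OF y(1) l(1)] y(2) l(1) by simp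
        moreover have "w $ (f l) + (\<Sum>s<?m. R $$ (l, q s) * w $ (q s)) = 0"
          using Rrow[OF wc l(1)] Rw l(1) by simp
        moreover have "(\<Sum>s<?m. R $$ (l, q s) * w $ (q s)) = (\<Sum>s<?m. R $$ (l, q s) * y $ (q s))"
          using wq by (intro sum.cong) auto
        ultimately show ?thesis using l(2) by (metis add_right_cancel)
      qed
    qed (use y wc in simp)
    thus "y \<in> {transpose_mat V0 *\<^sub>v x | x. x \<in> carrier_vec ?m}" using xc unfolding w_def by blast
  qed
  have ker: "\<forall>u\<in>carrier_vec n. V0 *\<^sub>v u = 0\<^sub>v ?m \<longrightarrow> (\<exists>x\<in>carrier_vec k. u = transpose_mat R *\<^sub>v x)"
  proof (intro ballI impI)
    fix u assume u: "u \<in> carrier_vec n" and Vu: "V0 *\<^sub>v u = 0\<^sub>v ?m"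
    define x where "x = vec k (\<lambda>l. u $ (f l))"
    have xc: "x \<in> carrier_vec k" unfolding x_def by simp
    define w where "w = transpose_mat R *\<^sub>v x"
    have wc: "w \<in> carrier_vec n" unfolding w_def using Rc xc by simp
    have Vw: "V0 *\<^sub>v w = 0\<^sub>v ?m" unfolding w_def by (rule orth_mv[OF V0c Rc orth2 xc])
    have wf: "w $ (f l) = u $ (f l)" if "l < k" for l
      unfolding w_def using RtX[OF xc that] that by (simp add: x_def)
    have "u = w"
    proof (rule eq_vecI)
      fix j assume "j < dim_vec w"
      hence j: "j < n" using wc by simp
      show "u $ j = w $ j"
      proof (cases "\<exists>l<k. j = f l")
        case True thus ?thesis using wf by auto
      next
        case False
        then obtain t where t: "t < ?m" "j = q t" using cover[OF j] by blast
        have "u $ (q t) - (\<Sum>l<k. R $$ (l, q t) * u $ (f l)) = 0"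
          using Vrow[OF u t(1)] Vu t(1) by simp
        moreover have "w $ (q t) - (\<Sum>l<k. R $$ (l, q t) * w $ (f l)) = 0"
          using Vrow[OF wc t(1)] Vw t(1) by simp
        moreover have "(\<Sum>l<k. R $$ (l, q t) * w $ (f l)) = (\<Sum>l<k. R $$ (l, q t) * u $ (f l))"
          using wf by (intro sum.cong) auto
        ultimately show ?thesis using t(2) by simp
      qed
    qed (use u wc in simp)
    thus "\<exists>x\<in>carrier_vec k. u = transpose_mat R *\<^sub>v x" using xc unfolding w_def by blast
  qed
  show ?thesis using kn V0c fcr img ker by blast
qed

lemma orth_iff:
  fixes V :: "'a::field mat"
  assumes V: "V \<in> carrier_mat k' n" and u: "u \<in> carrier_vec n"
  shows "(\<forall>x\<in>carrier_vec k'. (transpose_mat V *\<^sub>v x) \<bullet> u = 0) \<longleftrightarrow> V *\<^sub>v u = 0\<^sub>v k'"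
proof
  assume H: "\<forall>x\<in>carrier_vec k'. (transpose_mat V *\<^sub>v x) \<bullet> u = 0"
  show "V *\<^sub>v u = 0\<^sub>v k'"
  proof (rule eq_vecI)
    fix t assume "t < dim_vec (0\<^sub>v k' :: 'a vec)"
    hence t: "t < k'" by simp
    have Vu: "V *\<^sub>v u \<in> carrier_vec k'" using V u by simp
    have "(V *\<^sub>v u) $ t = unit_vec k' t \<bullet> (V *\<^sub>v u)" using scalar_prod_left_unit[OF Vu t] by simp
    also have "\<dots> = (transpose_mat V *\<^sub>v unit_vec k' t) \<bullet> u"
      by (rule transpose_vec_mult_scalar[symmetric, OF V u]) simp
    also have "\<dots> = 0" using H by simp
    finally show "(V *\<^sub>v u) $ t = 0\<^sub>v k' $ t" using t by simp
  qed (use V in simp)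
next
  assume Vu: "V *\<^sub>v u = 0\<^sub>v k'"
  show "\<forall>x\<in>carrier_vec k'. (transpose_mat V *\<^sub>v x) \<bullet> u = 0"
  proof
    fix x :: "'a vec" assume x: "x \<in> carrier_vec k'"
    have "(transpose_mat V *\<^sub>v x) \<bullet> u = x \<bullet> (V *\<^sub>v u)" by (rule transpose_vec_mult_scalar[OF V u x])
    also have "\<dots> = 0" using Vu x by simp
    finally show "(transpose_mat V *\<^sub>v x) \<bullet> u = 0" .
  qed
qed

lemma dual_eq:
  fixes G :: "'a::field mat"
  assumes G: "G \<in> carrier_mat k n"
  shows "dual_code {transpose_mat G *\<^sub>v x | x. x \<in> carrier_vec k} n = {y \<in> carrier_vec n. G *\<^sub>v y = 0\<^sub>v k}"
proof -
  have "y \<bullet> (transpose_mat G *\<^sub>v x) = (transpose_mat G *\<^sub>v x) \<bullet> y"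
    if "y \<in> carrier_vec n" "x \<in> carrier_vec k" for x y
    using that G by (intro comm_scalar_prod[of _ n]) auto
  hence "(\<forall>c\<in>{transpose_mat G *\<^sub>v x | x. x \<in> carrier_vec k}. y \<bullet> c = 0) \<longleftrightarrow>
      (\<forall>x\<in>carrier_vec k. (transpose_mat G *\<^sub>v x) \<bullet> y = 0)" if "y \<in> carrier_vec n" for y
    using that by auto
  thus ?thesis unfolding dual_code_def using orth_iff[OF G] by auto
qed

lemma code_facts:
  fixes G :: "'a::field mat"
  assumes gm: "is_gen_mat G C n k"
  shows "C \<subseteq> carrier_vec n" "0\<^sub>v n \<in> C" "\<And>a b. a \<in> C \<Longrightarrow> b \<in> C \<Longrightarrow> a - b \<in> C" "k \<le> n"
    "\<exists>V0. is_gen_mat V0 (dual_code C n) n (n - k)"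
    "\<And>V k' u. is_gen_mat V (dual_code C n) n k' \<Longrightarrow> u \<in> carrier_vec n \<Longrightarrow> V *\<^sub>v u = 0\<^sub>v k' \<Longrightarrow> u \<in> C"
    "\<And>V k' c. is_gen_mat V (dual_code C n) n k' \<Longrightarrow> c \<in> C \<Longrightarrow> V *\<^sub>v c = 0\<^sub>v k'"
proof -
  have G: "G \<in> carrier_mat k n" and fcr: "full_col_rank (transpose_mat G)"
    and C: "C = {transpose_mat G *\<^sub>v x | x. x \<in> carrier_vec k}" using gm unfolding is_gen_mat_def by auto
  have Gt: "transpose_mat G \<in> carrier_mat n k" using G by simp
  show "C \<subseteq> carrier_vec n" unfolding C using Gt by auto
  have "transpose_mat G *\<^sub>v 0\<^sub>v k = 0\<^sub>v n"
    by (intro eq_vecI) (use Gt in auto)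
  moreover have "0\<^sub>v k \<in> carrier_vec k" by simp
  ultimately show "0\<^sub>v n \<in> C" unfolding C by (metis (mono_tags, lifting) mem_Collect_eq)
  show "a - b \<in> C" if ab: "a \<in> C" "b \<in> C" for a b
  proof -
    obtain x y where xy: "x \<in> carrier_vec k" "a = transpose_mat G *\<^sub>v x" "y \<in> carrier_vec k" "b = transpose_mat G *\<^sub>v y"
      using ab unfolding C by blast
    have "a - b = transpose_mat G *\<^sub>v (x - y)"
      unfolding xy(2,4) by (rule mult_minus_distrib_mat_vec[symmetric, OF Gt xy(1) xy(3)])
    moreover have "x - y \<in> carrier_vec k" using xy by simp
    ultimately show ?thesis unfolding C by blast
  qed
  obtain R P f where RP: "R \<in> carrier_mat k n" "P \<in> carrier_mat k k" "R = P * G"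
     "\<forall>x\<in>carrier_vec n. (G *\<^sub>v x = 0\<^sub>v k) = (R *\<^sub>v x = 0\<^sub>v k)"
     "\<forall>i<k. f i < n" "inj_on f {..<k}" "\<forall>i<k. \<forall>l<k. R $$ (i, f l) = (if i = l then 1 else 0)"
    using pivots_GJ[OF G fcr] by blast
  note sc = systematic_core[OF RP(1) RP(5) RP(6) RP(7)]
  show "k \<le> n" using sc by blast
  from sc obtain V0 where V0: "V0 \<in> carrier_mat (n - k) n" "full_col_rank (transpose_mat V0)"
    "{transpose_mat V0 *\<^sub>v x | x. x \<in> carrier_vec (n - k)} = {y \<in> carrier_vec n. R *\<^sub>v y = 0\<^sub>v k}"
    "\<forall>u\<in>carrier_vec n. V0 *\<^sub>v u = 0\<^sub>v (n - k) \<longrightarrow> (\<exists>x\<in>carrier_vec k. u = transpose_mat R *\<^sub>v x)"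
    by blast
  have D: "dual_code C n = {y \<in> carrier_vec n. G *\<^sub>v y = 0\<^sub>v k}" unfolding C by (rule dual_eq[OF G])
  also have "\<dots> = {y \<in> carrier_vec n. R *\<^sub>v y = 0\<^sub>v k}" using RP(4) by auto
  finally have D': "dual_code C n = {transpose_mat V0 *\<^sub>v x | x. x \<in> carrier_vec (n - k)}" using V0(3) by simp
  show "\<exists>V0. is_gen_mat V0 (dual_code C n) n (n - k)"
    using V0(1,2) D' unfolding is_gen_mat_def by blast
  show "c \<in> C \<Longrightarrow> V *\<^sub>v c = 0\<^sub>v k'" if gV: "is_gen_mat V (dual_code C n) n k'" for V k' c
  proof -
    assume c: "c \<in> C"
    have V: "V \<in> carrier_mat k' n" and DV: "dual_code C n = {transpose_mat V *\<^sub>v x | x. x \<in> carrier_vec k'}"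
      using gV unfolding is_gen_mat_def by auto
    have cc: "c \<in> carrier_vec n" using c \<open>C \<subseteq> carrier_vec n\<close> by auto
    have "(transpose_mat V *\<^sub>v x) \<bullet> c = 0" if x: "x \<in> carrier_vec k'" for x :: "'a vec"
    proof -
      have "transpose_mat V *\<^sub>v x \<in> dual_code C n" unfolding DV using x by blast
      thus ?thesis using c unfolding dual_code_def by blast
    qed
    thus ?thesis using orth_iff[OF V cc] by blast
  qed
  show "u \<in> C" if gV: "is_gen_mat V (dual_code C n) n k'" and u: "u \<in> carrier_vec n" and Vu: "V *\<^sub>v u = 0\<^sub>v k'"
    for V k' u
  proof -
    have V: "V \<in> carrier_mat k' n" and DV: "dual_code C n = {transpose_mat V *\<^sub>v x | x. x \<in> carrier_vec k'}"
      using gV unfolding is_gen_mat_def by auto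
    have o1: "\<forall>x\<in>carrier_vec k'. (transpose_mat V *\<^sub>v x) \<bullet> u = 0" using orth_iff[OF V u] Vu by blast
    have "(transpose_mat V0 *\<^sub>v x) \<bullet> u = 0" if x: "x \<in> carrier_vec (n - k)" for x :: "'a vec"
    proof -
      have "transpose_mat V0 *\<^sub>v x \<in> dual_code C n" unfolding D' using x by blast
      then obtain x' where "x' \<in> carrier_vec k'" "transpose_mat V0 *\<^sub>v x = transpose_mat V *\<^sub>v x'"
        unfolding DV by blast
      thus ?thesis using o1 by simp
    qed
    hence "V0 *\<^sub>v u = 0\<^sub>v (n - k)" using orth_iff[OF V0(1) u] by blast
    then obtain x where x: "x \<in> carrier_vec k" "u = transpose_mat R *\<^sub>v x" using V0(4) u by blast
    have "transpose_mat R = transpose_mat G * transpose_mat P" unfolding RP(3)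
      by (rule transpose_mult[OF RP(2) G])
    hence "u = transpose_mat G *\<^sub>v (transpose_mat P *\<^sub>v x)" using x G RP(2) by simp
    moreover have "transpose_mat P *\<^sub>v x \<in> carrier_vec k"
      by (rule mult_mat_vec_carrier[of _ k k]) (use RP(2) x(1) in simp_all)
    ultimately show ?thesis unfolding C by blast
  qed
qed

lemma restrict_empty_mv:
  assumes "u \<in> carrier_vec 0"
  shows "restrict_cols V {} *\<^sub>v u = 0\<^sub>v (dim_row V)"
proof (rule eq_vecI)
  fix r assume "r < dim_vec (0\<^sub>v (dim_row V) :: 'a vec)"
  hence r: "r < dim_row V" by simp
  have "(restrict_cols V {} *\<^sub>v u) $ r = (\<Sum>c<card ({}::nat set). restrict_cols V {} $$ (r, c) * u $ c)"
    by (rule restrict_cols_mv) (use assms r in simp_all)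
  thus "(restrict_cols V {} *\<^sub>v u) $ r = 0\<^sub>v (dim_row V) $ r" using r by simp
qed simp

lemma sl_surj:
  assumes "finite A" "i \<in> A"
  obtains t where "t < card A" "sorted_list_of_set A ! t = i"
  using sl_bij[OF assms(1)] assms(2) unfolding bij_betw_def by (metis imageE lessThan_iff)

lemma sl_mem:
  assumes "finite A" "t < card A"
  shows "sorted_list_of_set A ! t \<in> A"
  using sl_bij[OF assms(1)] assms(2) unfolding bij_betw_def by blast

theorem corollary3p10:
  fixes C :: "'a::field vec set" and n k d :: nat
  assumes "lin_code C n k"
    and "d \<le> n - k"
  shows "rLD_MDS C n k d 1 \<longleftrightarrow> rMDS (dual_code C n) n (n - k) d 2"
proof -
  obtain G where gm: "is_gen_mat G C n k" using assms(1) unfolding lin_code_def by blast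
  note cf = code_facts[OF gm]
  have kd: "k + d \<le> n" using assms(2) cf(4) by simp
  let ?m = "n - k - d"
  have L: "rLD_MDS C n k d 1 \<longleftrightarrow> (\<forall>c\<in>C. c \<noteq> 0\<^sub>v n \<longrightarrow> ?m < wt c)"
    by (rule rld_iff[OF cf(1) cf(2) cf(3) kd])
  let ?W = "generic_mat (n - k - d) n :: 'a mpoly_pm fract mat"
  have Wc: "?W \<in> carrier_mat ?m n" by (simp add: generic_mat_def)
  have dW: "dim_row ?W = ?m" by (simp add: generic_mat_def)
  show ?thesis unfolding L
  proof
    assume H: "\<forall>c\<in>C. c \<noteq> 0\<^sub>v n \<longrightarrow> ?m < wt c"
    show "rMDS (dual_code C n) n (n - k) d 2"
      unfolding rMDS_def rMDS_mat_def
    proof (intro allI impI)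
      fix V :: "'a mat" and As :: "nat set list"
      assume gV: "is_gen_mat V (dual_code C n) n (n - k)"
        and As: "length As = 2 \<and> (\<forall>A\<in>set As. A \<subseteq> {..<n})"
        and fW: "full_col_rank (G_mat As ?W)"
      obtain A1 A2 where As12: "As = [A1, A2]" using As
        by (metis (no_types, lifting) One_nat_def length_0_conv length_Suc_conv numeral_2_eq_2)
      have A1: "A1 \<subseteq> {..<n}" and A2: "A2 \<subseteq> {..<n}" using As As12 by auto
      have fA1: "finite A1" and fA2: "finite A2" using A1 A2 finite_subset by blast+
      have Vc: "V \<in> carrier_mat (n - k) n" using gV unfolding is_gen_mat_def by blast
      have fW': "\<not> (\<exists>u1 u2. u1 \<in> carrier_vec (card A1) \<and> u2 \<in> carrier_vec (card A2)
         \<and> (u1 \<noteq> 0\<^sub>v (card A1) \<or> u2 \<noteq> 0\<^sub>v (card A2)) \<and> restrict_cols ?W A1 *\<^sub>v u1 = restrict_cols ?W A2 *\<^sub>v u2)"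
        using fW unfolding As12 G_mat_fcr_iff .
      show "full_col_rank (G_mat As V)"
        unfolding As12 G_mat_fcr_iff
      proof
        assume "\<exists>u1 u2. u1 \<in> carrier_vec (card A1) \<and> u2 \<in> carrier_vec (card A2)
         \<and> (u1 \<noteq> 0\<^sub>v (card A1) \<or> u2 \<noteq> 0\<^sub>v (card A2)) \<and> restrict_cols V A1 *\<^sub>v u1 = restrict_cols V A2 *\<^sub>v u2"
        then obtain u1 u2 where u: "u1 \<in> carrier_vec (card A1)" "u2 \<in> carrier_vec (card A2)"
          "u1 \<noteq> 0\<^sub>v (card A1) \<or> u2 \<noteq> 0\<^sub>v (card A2)" "restrict_cols V A1 *\<^sub>v u1 = restrict_cols V A2 *\<^sub>v u2"
          by blast
        show False
        proof (cases "A1 \<inter> A2 = {}")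
          case False
          then obtain j where j: "j \<in> A1" "j \<in> A2" by blast
          have jn: "j < n" using j A1 by auto
          let ?e = "unit_vec n j :: 'a mpoly_pm fract vec"
          have ec: "?e \<in> carrier_vec n" by simp
          have e1: "?W *\<^sub>v ?e = restrict_cols ?W A1 *\<^sub>v vec (card A1) (\<lambda>c. ?e $ (sorted_list_of_set A1 ! c))"
            by (rule restrict_mv[OF Wc A1 ec]) (use j in \<open>auto simp: unit_vec_def split: if_splits\<close>)
          have e2: "?W *\<^sub>v ?e = restrict_cols ?W A2 *\<^sub>v vec (card A2) (\<lambda>c. ?e $ (sorted_list_of_set A2 ! c))"
            by (rule restrict_mv[OF Wc A2 ec]) (use j in \<open>auto simp: unit_vec_def split: if_splits\<close>)
          obtain t where t: "t < card A1" "sorted_list_of_set A1 ! t = j" using sl_surj[OF fA1 j(1)] .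
          have one: "vec (card A1) (\<lambda>c. ?e $ (sorted_list_of_set A1 ! c)) $ t = 1" using t jn by simp
          have "vec (card A1) (\<lambda>c. ?e $ (sorted_list_of_set A1 ! c)) \<noteq> 0\<^sub>v (card A1)"
          proof
            assume eq: "vec (card A1) (\<lambda>c. ?e $ (sorted_list_of_set A1 ! c)) = 0\<^sub>v (card A1)"
            have "vec (card A1) (\<lambda>c. ?e $ (sorted_list_of_set A1 ! c)) $ t = 0\<^sub>v (card A1) $ t"
              using eq by (rule arg_cong)
            thus False using one t(1) by simp
          qed
          thus False using fW' e1 e2 by (metis carrier_vec_dim_vec dim_vec)
        next
          case True
          define w where "w = spread n A1 u1 - spread n A2 u2"
          have wc: "w \<in> carrier_vec n" unfolding w_def using spread_carrier by (simp add: spread_def)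
          have "V *\<^sub>v w = V *\<^sub>v spread n A1 u1 - V *\<^sub>v spread n A2 u2"
            unfolding w_def by (rule mult_minus_distrib_mat_vec[OF Vc spread_carrier spread_carrier])
          also have "\<dots> = restrict_cols V A1 *\<^sub>v u1 - restrict_cols V A2 *\<^sub>v u2"
            using spread_mv[OF Vc A1 u(1)] spread_mv[OF Vc A2 u(2)] by simp
          also have "\<dots> = 0\<^sub>v (n - k)"
          proof -
            have dV: "dim_row V = n - k" using Vc by simp
            have "restrict_cols V A2 *\<^sub>v u2 \<in> carrier_vec (dim_row V)"
              by (rule mult_mat_vec_carrier[OF restrict_cols_carrier u(2)])
            hence "restrict_cols V A2 *\<^sub>v u2 \<in> carrier_vec (n - k)" unfolding dV .
            thus ?thesis unfolding u(4) by (rule minus_cancel_vec)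
          qed
          finally have Vw: "V *\<^sub>v w = 0\<^sub>v (n - k)" .
          have wC: "w \<in> C" by (rule cf(6)[OF gV wc Vw])
          have s1out: "spread n A1 u1 $ j = 0" if "j < n" "j \<notin> A1" for j
            using spread_out[OF that(2), of n u1] that(1) by auto
          have s2out: "spread n A2 u2 $ j = 0" if "j < n" "j \<notin> A2" for j
            using spread_out[OF that(2), of n u2] that(1) by auto
          have wj: "w $ j = spread n A1 u1 $ j - spread n A2 u2 $ j" if "j < n" for j
            unfolding w_def using that by (simp add: spread_def)
          have wnz: "w \<noteq> 0\<^sub>v n"
          proof
            assume w0: "w = 0\<^sub>v n"
            from u(3) show False
            proof
              assume "u1 \<noteq> 0\<^sub>v (card A1)"
              then obtain c where c: "c < card A1" "u1 $ c \<noteq> 0" using vec_nonzero_ex[OF u(1)] by blast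
              let ?j = "sorted_list_of_set A1 ! c"
              have jA: "?j \<in> A1" by (rule sl_mem[OF fA1 c(1)])
              have jn: "?j < n" using jA A1 by auto
              have "?j \<notin> A2" using jA True by blast
              hence "w $ ?j = u1 $ c" using wj[OF jn] s2out[OF jn] spread_at[OF A1 c(1)] by simp
              thus False using w0 jn c(2) by simp
            next
              assume "u2 \<noteq> 0\<^sub>v (card A2)"
              then obtain c where c: "c < card A2" "u2 $ c \<noteq> 0" using vec_nonzero_ex[OF u(2)] by blast
              let ?j = "sorted_list_of_set A2 ! c"
              have jA: "?j \<in> A2" by (rule sl_mem[OF fA2 c(1)])
              have jn: "?j < n" using jA A2 by auto
              have "?j \<notin> A1" using jA True by blast
              hence "w $ ?j = - u2 $ c" using wj[OF jn] s1out[OF jn] spread_at[OF A2 c(1)] by simp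
              thus False using w0 jn c(2) by simp
            qed
          qed
          have "?m < wt w" using H wC wnz by blast
          also have "wt w \<le> card (A1 \<union> A2)"
          proof (rule wt_le_support[OF wc])
            fix j assume j: "j < n" "w $ j \<noteq> 0"
            show "j \<in> A1 \<union> A2"
            proof (rule ccontr)
              assume "j \<notin> A1 \<union> A2"
              hence "w $ j = 0" using wj[OF j(1)] s1out[OF j(1)] s2out[OF j(1)] by simp
              thus False using j(2) by simp
            qed
          qed (use fA1 fA2 in simp)
          also have "\<dots> \<le> card A1 + card A2" by (rule card_Un_le)
          finally have "dim_row ?W < card A1 + card A2" using dW by simp
          thus False using big_dep fW' by blast
        qed
      qed
    qed
  next
    assume H: "rMDS (dual_code C n) n (n - k) d 2"
    obtain V0 where gV0: "is_gen_mat V0 (dual_code C n) n (n - k)" using cf(5) by blast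
    have V0c: "V0 \<in> carrier_mat (n - k) n" using gV0 unfolding is_gen_mat_def by blast
    have R: "full_col_rank (G_mat [A1, A2] V0)"
      if "A1 \<subseteq> {..<n}" "A2 \<subseteq> {..<n}" "full_col_rank (G_mat [A1, A2] ?W)" for A1 A2
      using H gV0 that unfolding rMDS_def rMDS_mat_def by (simp add: numeral_2_eq_2)
    show "\<forall>c\<in>C. c \<noteq> 0\<^sub>v n \<longrightarrow> ?m < wt c"
    proof (intro ballI impI, rule ccontr)
      fix c assume c: "c \<in> C" "c \<noteq> 0\<^sub>v n" and nlt: "\<not> ?m < wt c"
      have cc: "c \<in> carrier_vec n" using c cf(1) by auto
      define A1 where "A1 = {i. i < n \<and> c $ i \<noteq> 0}"
      have A1sub: "A1 \<subseteq> {..<n}" unfolding A1_def by auto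
      have fA1: "finite A1" using A1sub finite_subset by blast
      have cardA1: "card A1 = wt c" unfolding A1_def wt_def using cc by simp
      hence cm: "card A1 \<le> ?m" using nlt by simp
      have fW: "full_col_rank (G_mat [A1, {}] ?W)"
        unfolding G_mat_fcr_iff
      proof
        assume "\<exists>u1 u2. u1 \<in> carrier_vec (card A1) \<and> u2 \<in> carrier_vec (card ({}::nat set))
         \<and> (u1 \<noteq> 0\<^sub>v (card A1) \<or> u2 \<noteq> 0\<^sub>v (card ({}::nat set))) \<and> restrict_cols ?W A1 *\<^sub>v u1 = restrict_cols ?W {} *\<^sub>v u2"
        then obtain u1 u2 where u: "u1 \<in> carrier_vec (card A1)" "u2 \<in> carrier_vec (card ({}::nat set))"
          "u1 \<noteq> 0\<^sub>v (card A1) \<or> u2 \<noteq> 0\<^sub>v (card ({}::nat set))" "restrict_cols ?W A1 *\<^sub>v u1 = restrict_cols ?W {} *\<^sub>v u2"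
          by blast
        have u20: "u2 \<in> carrier_vec 0" using u(2) by simp
        hence "dim_vec u2 = 0" by (rule carrier_vecD)
        hence "u2 = 0\<^sub>v 0" using vec_of_dim_0 by blast
        hence u1nz: "u1 \<noteq> 0\<^sub>v (card A1)" using u(3) by simp
        have "restrict_cols ?W A1 *\<^sub>v u1 = 0\<^sub>v ?m" using u(4) restrict_empty_mv[OF u20, of ?W] dW by simp
        hence "u1 = 0\<^sub>v (card A1)" by (rule generic_indep[OF A1sub cm u(1)])
        thus False using u1nz by simp
      qed
      hence fV: "full_col_rank (G_mat [A1, {}] V0)" using R A1sub by simp
      define u1 where "u1 = vec (card A1) (\<lambda>t. c $ (sorted_list_of_set A1 ! t))"
      have u1c: "u1 \<in> carrier_vec (card A1)" unfolding u1_def by simp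
      have "V0 *\<^sub>v c = restrict_cols V0 A1 *\<^sub>v u1" unfolding u1_def
        by (rule restrict_mv[OF V0c A1sub cc]) (simp add: A1_def)
      moreover have "V0 *\<^sub>v c = 0\<^sub>v (n - k)" by (rule cf(7)[OF gV0 c(1)])
      moreover have "restrict_cols V0 {} *\<^sub>v 0\<^sub>v 0 = 0\<^sub>v (n - k)"
        using restrict_empty_mv[of "0\<^sub>v 0" V0] V0c by simp
      ultimately have eq: "restrict_cols V0 A1 *\<^sub>v u1 = restrict_cols V0 {} *\<^sub>v 0\<^sub>v (card ({}::nat set))" by simp
      obtain i where i: "i < n" "c $ i \<noteq> 0" using vec_nonzero_ex[OF cc c(2)] by blast
      have iA: "i \<in> A1" unfolding A1_def using i by simp
      obtain t where t: "t < card A1" "sorted_list_of_set A1 ! t = i" using sl_surj[OF fA1 iA] .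
      have "u1 $ t \<noteq> 0" unfolding u1_def using t i by simp
      hence "u1 \<noteq> 0\<^sub>v (card A1)" using t(1) by auto
      hence "\<not> full_col_rank (G_mat [A1, {}] V0)"
        unfolding G_mat_fcr_iff using u1c eq by (metis zero_carrier_vec)
      thus False using fV by blast
    qed
  qed
qed

end
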